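(* Let $G$ and $G'$ be graphs. If there exists a chordal graph $F$ of treewidth at most $2$ such that the number of homomorphisms from $F$ to $G$ differs from the number of homomorphisms from $F$ to $G'$, then $G$ and $G'$ are distinguishable by EB-1WL.
   Context: All graphs are finite, simple and undirected; the graphs $G,G'$ have no isolated vertices; $N(v)$ denotes the neighborhood of $v$. A homomorphism from $F=(V_F,E_F)$ to $G=(V,E)$ is a map $h:V_F\to V$ with $\{h(a),h(b)\}\in E$ for every $\{a,b\}\in E_F$. A graph is chordal if it has no induced cycle of length $\ge4$. An ordered edge of $G=(V,E)$ is a pair $(u,v)$ with $\{u,v\}\in E$. EB-1WL coloring: $\mathrm{eb}^{(0)}(G,(u,v))=1$ for every ordered edge, and $\mathrm{eb}^{(\ell+1)}(G,(u,v)) = \big(\mathrm{eb}^{(\ell)}(G,(u,v)),\ \{\!\{\mathrm{eb}^{(\ell)}(G,(u,x)) : x\in N(u)\}\!\},\ \{\!\{(\mathrm{eb}^{(\ell)}(G,(u,y)),\mathrm{eb}^{(\ell)}(G,(v,y))) : y\in N(u)\cap N(v)\}\!\},\ \{\!\{\mathrm{eb}^{(\ell)}(G,(v,z)) : z\in N(v)\}\!\}\big)$. $\mathrm{eb}^{(\ell)}(G)$ is the multiset of $\mathrm{eb}^{(\ell)}(G,(u,v))$ over all ordered edges. Graphs are distinguishable by EB-1WL if they have different numbers of vertices or there is $\ell$ with $\mathrm{eb}^{(\ell)}(G)\neq\mathrm{eb}^{(\ell)}(G')$. Colors are nested tuples/multisets, comparable across graphs. *)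

theory Defs
  imports Main "HOL-Library.Multiset" "HOL-Library.FuncSet"
begin

definition is_graph :: "'a set \<Rightarrow> 'a set set \<Rightarrow> bool" where
  "is_graph V E \<longleftrightarrow> finite V \<and>
     (\<forall>e\<in>E. \<exists>u v. e = {u, v} \<and> u \<noteq> v \<and> u \<in> V \<and> v \<in> V)"

definition no_isolated :: "'a set \<Rightarrow> 'a set set \<Rightarrow> bool" where
  "no_isolated V E \<longleftrightarrow> (\<forall>v\<in>V. \<exists>u. {u, v} \<in> E)"

definition nbhd :: "'a set set \<Rightarrow> 'a \<Rightarrow> 'a set" where
  "nbhd E u = {v. {u, v} \<in> E}"

definition is_hom :: "'c set set \<Rightarrow> 'a set set \<Rightarrow> ('c \<Rightarrow> 'a) \<Rightarrow> bool" where
  "is_hom EF E h \<longleftrightarrow> (\<forall>a b. {a, b} \<in> EF \<longrightarrow> {h a, h b} \<in> E)"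

text \<open>Maps are taken extensional (undefined outside V_F) so that they are exactly the
  maps V_F \<rightarrow> V.\<close>
definition hom_count :: "'c set \<Rightarrow> 'c set set \<Rightarrow> 'a set \<Rightarrow> 'a set set \<Rightarrow> nat" where
  "hom_count VF EF V E = card {h \<in> VF \<rightarrow>\<^sub>E V. is_hom EF E h}"

definition is_cycle :: "'a set \<Rightarrow> 'a set set \<Rightarrow> 'a list \<Rightarrow> bool" where
  "is_cycle V E vs \<longleftrightarrow> length vs \<ge> 3 \<and> distinct vs \<and> set vs \<subseteq> V \<and>
     (\<forall>i < length vs. {vs ! i, vs ! ((i + 1) mod length vs)} \<in> E)"

definition is_induced_cycle :: "'a set \<Rightarrow> 'a set set \<Rightarrow> 'a list \<Rightarrow> bool" where
  "is_induced_cycle V E vs \<longleftrightarrow> is_cycle V E vs \<and>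
     (\<forall>i < length vs. \<forall>j < length vs. {vs ! i, vs ! j} \<in> E \<longrightarrow>
        j = (i + 1) mod length vs \<or> i = (j + 1) mod length vs)"

definition chordal :: "'a set \<Rightarrow> 'a set set \<Rightarrow> bool" where
  "chordal V E \<longleftrightarrow> \<not> (\<exists>vs. length vs \<ge> 4 \<and> is_induced_cycle V E vs)"

definition connected_in :: "'a set set \<Rightarrow> 'a set \<Rightarrow> bool" where
  "connected_in E S \<longleftrightarrow>
     (\<forall>u\<in>S. \<forall>v\<in>S. (\<lambda>x y. x \<in> S \<and> y \<in> S \<and> {x, y} \<in> E)\<^sup>*\<^sup>* u v)"

definition is_tree :: "'t set \<Rightarrow> 't set set \<Rightarrow> bool" where
  "is_tree VT ET \<longleftrightarrow> is_graph VT ET \<and> VT \<noteq> {} \<and> connected_in ET VT \<and>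
     \<not> (\<exists>vs. is_cycle VT ET vs)"

definition is_tree_decomposition ::
  "'c set \<Rightarrow> 'c set set \<Rightarrow> nat set \<Rightarrow> nat set set \<Rightarrow> (nat \<Rightarrow> 'c set) \<Rightarrow> bool" where
  "is_tree_decomposition VF EF VT ET bag \<longleftrightarrow>
     is_tree VT ET \<and>
     (\<forall>t\<in>VT. bag t \<subseteq> VF) \<and>
     (\<Union>t\<in>VT. bag t) = VF \<and>
     (\<forall>e\<in>EF. \<exists>t\<in>VT. e \<subseteq> bag t) \<and>
     (\<forall>v\<in>VF. connected_in ET {t \<in> VT. v \<in> bag t})"

definition decomposition_width :: "nat set \<Rightarrow> (nat \<Rightarrow> 'c set) \<Rightarrow> nat" where
  "decomposition_width VT bag = Max ((\<lambda>t. card (bag t)) ` VT) - 1"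

definition treewidth :: "'c set \<Rightarrow> 'c set set \<Rightarrow> nat" where
  "treewidth VF EF = (LEAST k. \<exists>VT ET bag.
      is_tree_decomposition VF EF VT ET bag \<and> decomposition_width VT bag = k)"

datatype color = Base
  | Node color "color multiset" "(color \<times> color) multiset" "color multiset"

fun ebc :: "nat \<Rightarrow> 'a set set \<Rightarrow> 'a \<times> 'a \<Rightarrow> color" where
  "ebc 0 E uv = Base"
| "ebc (Suc l) E (u, v) =
     Node (ebc l E (u, v))
          (image_mset (\<lambda>x. ebc l E (u, x)) (mset_set (nbhd E u)))
          (image_mset (\<lambda>y. (ebc l E (u, y), ebc l E (v, y))) (mset_set (nbhd E u \<inter> nbhd E v)))
          (image_mset (\<lambda>z. ebc l E (v, z)) (mset_set (nbhd E v)))"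

definition ordered_edges :: "'a set set \<Rightarrow> ('a \<times> 'a) set" where
  "ordered_edges E = {(u, v). {u, v} \<in> E}"

definition eb_multiset :: "nat \<Rightarrow> 'a set set \<Rightarrow> color multiset" where
  "eb_multiset l E = image_mset (ebc l E) (mset_set (ordered_edges E))"

definition eb_distinguishable :: "'a set \<Rightarrow> 'a set set \<Rightarrow> 'b set \<Rightarrow> 'b set set \<Rightarrow> bool" where
  "eb_distinguishable V E V' E' \<longleftrightarrow>
     card V \<noteq> card V' \<or> (\<exists>l. eb_multiset l E \<noteq> eb_multiset l E')"

end

theory Submission
  imports Defs Complex_Main
begin

fun proj :: "color \<Rightarrow> color" where
  "proj Base = Base" | "proj (Node a b c d) = a"
fun cc2 :: "color \<Rightarrow> color multiset" where
  "cc2 Base = {#}" | "cc2 (Node a b c d) = b"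
fun cc3 :: "color \<Rightarrow> (color \<times> color) multiset" where
  "cc3 Base = {#}" | "cc3 (Node a b c d) = c"
fun cc4 :: "color \<Rightarrow> color multiset" where
  "cc4 Base = {#}" | "cc4 (Node a b c d) = d"
fun crev :: "color \<Rightarrow> color" where
  "crev Base = Base"
| "crev (Node a b c d) = Node (crev a) d (image_mset prod.swap c) b"

definition vc :: "nat \<Rightarrow> 'a set set \<Rightarrow> 'a \<Rightarrow> color multiset" where
  "vc l E u = image_mset (\<lambda>z. ebc l E (u, z)) (mset_set (nbhd E u))"

lemma ebc_proj: "ebc l E p = proj (ebc (Suc l) E p)"
  by (cases p) simp

lemma vc_proj: "vc l E u = image_mset proj (vc (Suc l) E u)"
  unfolding vc_def by (simp add: multiset.map_comp o_def)

lemma ebc_cc2: "cc2 (ebc (Suc l) E (u,v)) = vc l E u"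
  unfolding vc_def by simp
lemma ebc_cc4: "cc4 (ebc (Suc l) E (u,v)) = vc l E v"
  unfolding vc_def by simp
lemma ebc_cc3: "cc3 (ebc (Suc l) E (u,v)) =
   image_mset (\<lambda>y. (ebc l E (u, y), ebc l E (v, y))) (mset_set (nbhd E u \<inter> nbhd E v))"
  by simp

lemma ebc_rev: "ebc l E (v,u) = crev (ebc l E (u,v))"
proof (induction l arbitrary: u v)
  case 0
  then show ?case by simp
next
  case (Suc l)
  have "image_mset prod.swap (image_mset (\<lambda>y. (ebc l E (u, y), ebc l E (v, y))) (mset_set (nbhd E u \<inter> nbhd E v)))
     = image_mset (\<lambda>y. (ebc l E (v, y), ebc l E (u, y))) (mset_set (nbhd E v \<inter> nbhd E u))"
    by (simp add: multiset.map_comp o_def Int_commute)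
  moreover have ih: "crev (ebc l E (u, v)) = ebc l E (v, u)" using Suc[of v u] by simp
  ultimately show ?case
    by (simp only: ebc.simps crev.simps ih)
qed

lemma edge_props:
  assumes "is_graph V E" "{a,b} \<in> E"
  shows "a \<noteq> b \<and> a \<in> V \<and> b \<in> V"
proof -
  have "\<forall>e\<in>E. \<exists>u v. e = {u, v} \<and> u \<noteq> v \<and> u \<in> V \<and> v \<in> V"
    using assms(1) unfolding is_graph_def by simp
  from this[rule_format, OF assms(2)]
  obtain u v where "{a,b} = {u,v}" "u \<noteq> v" "u \<in> V" "v \<in> V" by blast
  then show ?thesis by (auto simp: doubleton_eq_iff)
qed

lemma graph_finite_edges: "is_graph V E \<Longrightarrow> finite E"
proof -
  assume g: "is_graph V E"
  have "E \<subseteq> Pow V"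
  proof
    fix e assume "e \<in> E"
    have "\<forall>e\<in>E. \<exists>u v. e = {u, v} \<and> u \<noteq> v \<and> u \<in> V \<and> v \<in> V"
      using g unfolding is_graph_def by simp
    from this[rule_format, OF \<open>e \<in> E\<close>] show "e \<in> Pow V" by auto
  qed
  moreover have "finite V" using g unfolding is_graph_def by simp
  ultimately show ?thesis by (meson finite_Pow_iff finite_subset)
qed

lemma oe_subset: "is_graph V E \<Longrightarrow> ordered_edges E \<subseteq> V \<times> V"
  unfolding ordered_edges_def using edge_props by fastforce

lemma graph_finite: "is_graph V E \<Longrightarrow> finite V"
  unfolding is_graph_def by simp

lemma oe_finite: "is_graph V E \<Longrightarrow> finite (ordered_edges E)"
  using oe_subset graph_finite by (metis finite_SigmaI finite_subset)

lemma nbhd_subset: "is_graph V E \<Longrightarrow> nbhd E u \<subseteq> V"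
  unfolding nbhd_def using edge_props by fastforce

lemma nbhd_finite: "is_graph V E \<Longrightarrow> finite (nbhd E u)"
  using nbhd_subset graph_finite by (metis finite_subset)

definition W :: "nat \<Rightarrow> 'a set set \<Rightarrow> 'c set \<Rightarrow> 'c set set \<Rightarrow> ('c \<Rightarrow> color multiset \<Rightarrow> nat)
   \<Rightarrow> ('c \<Rightarrow> 'c \<Rightarrow> color \<Rightarrow> nat) \<Rightarrow> ('c \<Rightarrow> 'a) \<Rightarrow> nat" where
  "W l E VF EF \<alpha> \<beta> h = (\<Prod>x\<in>VF. \<alpha> x (vc l E (h x))) *
     (\<Prod>p\<in>ordered_edges EF. \<beta> (fst p) (snd p) (ebc l E (h (fst p), h (snd p))))"

definition homs :: "'c set \<Rightarrow> 'c set set \<Rightarrow> 'a set \<Rightarrow> 'a set set \<Rightarrow> ('c \<Rightarrow> 'a) set" where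
  "homs VF EF V E = {h \<in> VF \<rightarrow>\<^sub>E V. is_hom EF E h}"

definition Tot where
  "Tot l V E VF EF \<alpha> \<beta> = (\<Sum>h\<in>homs VF EF V E. W l E VF EF \<alpha> \<beta> h)"

lemma W_lift: "W l E VF EF \<alpha> \<beta> h =
   W (Suc l) E VF EF (\<lambda>x m. \<alpha> x (image_mset proj m)) (\<lambda>a b c. \<beta> a b (proj c)) h"
  unfolding W_def by (simp add: vc_proj[symmetric] ebc_proj[symmetric])

lemma homs_finite: "finite V \<Longrightarrow> finite VF \<Longrightarrow> finite (homs VF EF V E)"
  unfolding homs_def by (rule finite_subset[OF _ finite_PiE]) auto

lemma Tot_lift: "Tot l V E VF EF \<alpha> \<beta> =
   Tot (Suc l) V E VF EF (\<lambda>x m. \<alpha> x (image_mset proj m)) (\<lambda>a b c. \<beta> a b (proj c))"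
  unfolding Tot_def by (rule sum.cong[OF refl W_lift])

lemma Tot_one: "hom_count VF EF V E = Tot l V E VF EF (\<lambda>_ _. 1) (\<lambda>_ _ _. 1)"
  unfolding Tot_def hom_count_def W_def homs_def by simp

lemma is_hom_sym: "is_hom EF E h \<Longrightarrow> {a,b} \<in> EF \<Longrightarrow> {h b, h a} \<in> E"
  unfolding is_hom_def by (metis insert_commute)

lemma homs_decomp:
  assumes gF: "is_graph VF EF" and w: "w \<in> VF"
  shows "homs VF EF V E = (\<lambda>(h,z). h(w:=z)) ` Sigma (homs (VF - {w}) {e\<in>EF. w \<notin> e} V E)
            (\<lambda>h. {z\<in>V. \<forall>x\<in>nbhd EF w. {h x, z} \<in> E})"
proof (rule set_eqI, rule iffI)
  fix g assume g: "g \<in> homs VF EF V E"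
  let ?h = "g(w:=undefined)"
  have "?h \<in> homs (VF - {w}) {e\<in>EF. w \<notin> e} V E"
    using g unfolding homs_def is_hom_def PiE_def extensional_def by auto
  moreover have "g w \<in> V" using g w unfolding homs_def by auto
  moreover have "\<forall>x\<in>nbhd EF w. {?h x, g w} \<in> E"
  proof
    fix x assume x: "x \<in> nbhd EF w"
    then have "{w,x} \<in> EF" unfolding nbhd_def by simp
    then have "x \<noteq> w" using edge_props[OF gF] by blast
    moreover have "{g x, g w} \<in> E" using is_hom_sym[OF _ \<open>{w,x} \<in> EF\<close>] g unfolding homs_def by auto
    ultimately show "{?h x, g w} \<in> E" by simp
  qed
  moreover have "g = ?h(w := g w)" by simp
  ultimately show "g \<in> (\<lambda>(h,z). h(w:=z)) ` Sigma (homs (VF - {w}) {e\<in>EF. w \<notin> e} V E)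
            (\<lambda>h. {z\<in>V. \<forall>x\<in>nbhd EF w. {h x, z} \<in> E})"
    by (intro image_eqI[of _ _ "(?h, g w)"]) auto
next
  fix g assume "g \<in> (\<lambda>(h,z). h(w:=z)) ` Sigma (homs (VF - {w}) {e\<in>EF. w \<notin> e} V E)
            (\<lambda>h. {z\<in>V. \<forall>x\<in>nbhd EF w. {h x, z} \<in> E})"
  then obtain h z where g: "g = h(w:=z)" and h: "h \<in> homs (VF - {w}) {e\<in>EF. w \<notin> e} V E"
    and z: "z \<in> V" and zn: "\<forall>x\<in>nbhd EF w. {h x, z} \<in> E" by auto
  have "g \<in> VF \<rightarrow>\<^sub>E V" using h z w unfolding g homs_def PiE_def extensional_def by auto
  moreover have "is_hom EF E g"
    unfolding is_hom_def
  proof (intro allI impI)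
    fix a b assume ab: "{a,b} \<in> EF"
    then have anb: "a \<noteq> b" using edge_props[OF gF] by blast
    show "{g a, g b} \<in> E"
    proof (cases "a = w")
      case True
      then have "b \<in> nbhd EF w" using ab unfolding nbhd_def by simp
      then have "{h b, z} \<in> E" using zn by blast
      then show ?thesis using True anb unfolding g by (simp add: insert_commute)
    next
      case False
      show ?thesis
      proof (cases "b = w")
        case True
        then have "a \<in> nbhd EF w" using ab unfolding nbhd_def by (simp add: insert_commute)
        then have "{h a, z} \<in> E" using zn by blast
        then show ?thesis using True anb unfolding g by simp
      next
        case False2: False
        then have "{a,b} \<in> {e\<in>EF. w \<notin> e}" using ab False by simp
        then have "{h a, h b} \<in> E" using h unfolding homs_def is_hom_def by blast
        then show ?thesis using False False2 unfolding g by simp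
      qed
    qed
  qed
  ultimately show "g \<in> homs VF EF V E" unfolding homs_def by simp
qed

lemma homs_decomp_inj:
  shows "inj_on (\<lambda>(h,z). h(w:=z)) (Sigma (homs (VF - {w}) EF' V E) C)"
proof (rule inj_onI, clarsimp)
  fix h z h' z'
  assume h: "h \<in> homs (VF - {w}) EF' V E" and h': "h' \<in> homs (VF - {w}) EF' V E"
    and eq: "h(w := z) = h'(w := z')"
  have "z = z'" using fun_cong[OF eq, of w] by simp
  moreover have "h = h'"
  proof
    fix t show "h t = h' t"
    proof (cases "t = w")
      case True
      then have "h t = undefined" "h' t = undefined" using h h' unfolding homs_def PiE_def extensional_def by auto
      then show ?thesis by simp
    next
      case False
      then show ?thesis using fun_cong[OF eq, of t] by simp
    qed
  qed
  ultimately show "h = h' \<and> z = z'" by simp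
qed

lemma oe_split:
  assumes gF: "is_graph VF EF"
  shows "ordered_edges EF = ordered_edges {e\<in>EF. w \<notin> e} \<union> ((\<lambda>x. (w,x)) ` nbhd EF w)
            \<union> ((\<lambda>x. (x,w)) ` nbhd EF w)"
  unfolding ordered_edges_def nbhd_def using edge_props[OF gF]
  by (auto simp: insert_commute)

lemma W_decomp:
  assumes gF: "is_graph VF EF" and w: "w \<in> VF"
  shows "W l E VF EF \<alpha> \<beta> (h(w:=z)) = W l E (VF - {w}) {e\<in>EF. w \<notin> e} \<alpha> \<beta> h *
     (\<alpha> w (vc l E z) * (\<Prod>x\<in>nbhd EF w. \<beta> w x (ebc l E (z, h x)) * \<beta> x w (ebc l E (h x, z))))"
proof -
  let ?EF' = "{e\<in>EF. w \<notin> e}"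
  let ?N = "nbhd EF w"
  have fin: "finite VF" using gF graph_finite by blast
  have finN: "finite ?N" using nbhd_finite[OF gF] .
  have gF': "is_graph VF ?EF'" using gF unfolding is_graph_def by auto
  have finO: "finite (ordered_edges ?EF')" using oe_finite[OF gF'] .
  have wN: "w \<notin> ?N" using edge_props[OF gF] unfolding nbhd_def by blast
  have P1: "(\<Prod>x\<in>VF. \<alpha> x (vc l E ((h(w:=z)) x))) = \<alpha> w (vc l E z) * (\<Prod>x\<in>VF - {w}. \<alpha> x (vc l E (h x)))"
    using prod.remove[OF fin w, of "\<lambda>x. \<alpha> x (vc l E ((h(w:=z)) x))"] by simp
  let ?f = "\<lambda>p. \<beta> (fst p) (snd p) (ebc l E ((h(w:=z)) (fst p), (h(w:=z)) (snd p)))"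
  have d1: "ordered_edges ?EF' \<inter> ((\<lambda>x. (w,x)) ` ?N \<union> (\<lambda>x. (x,w)) ` ?N) = {}"
    unfolding ordered_edges_def by auto
  have d2: "(\<lambda>x. (w,x)) ` ?N \<inter> (\<lambda>x. (x,w)) ` ?N = {}" using wN by auto
  have "(\<Prod>p\<in>ordered_edges EF. ?f p) =
     (\<Prod>p\<in>ordered_edges ?EF'. ?f p) * ((\<Prod>p\<in>(\<lambda>x. (w,x)) ` ?N. ?f p) * (\<Prod>p\<in>(\<lambda>x. (x,w)) ` ?N. ?f p))"
  proof -
    have fB: "finite ((\<lambda>x. (w,x)) ` ?N)" and fC: "finite ((\<lambda>x. (x,w)) ` ?N)" using finN by auto
    have e1: "prod ?f (ordered_edges ?EF' \<union> ((\<lambda>x. (w,x)) ` ?N \<union> (\<lambda>x. (x,w)) ` ?N))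
       = prod ?f (ordered_edges ?EF') * prod ?f ((\<lambda>x. (w,x)) ` ?N \<union> (\<lambda>x. (x,w)) ` ?N)"
      by (rule prod.union_disjoint[OF finO _ d1]) (use fB fC in auto)
    have e2: "prod ?f ((\<lambda>x. (w,x)) ` ?N \<union> (\<lambda>x. (x,w)) ` ?N) = prod ?f ((\<lambda>x. (w,x)) ` ?N) * prod ?f ((\<lambda>x. (x,w)) ` ?N)"
      by (rule prod.union_disjoint[OF fB fC d2])
    show ?thesis unfolding oe_split[OF gF, of w] Un_assoc by (simp only: e1 e2)
  qed
  also have "(\<Prod>p\<in>ordered_edges ?EF'. ?f p) =
     (\<Prod>p\<in>ordered_edges ?EF'. \<beta> (fst p) (snd p) (ebc l E (h (fst p), h (snd p))))"
    by (rule prod.cong) (auto simp: ordered_edges_def)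
  also have "(\<Prod>p\<in>(\<lambda>x. (w,x)) ` ?N. ?f p) = (\<Prod>x\<in>?N. \<beta> w x (ebc l E (z, h x)))"
    using wN by (subst prod.reindex) (auto intro!: prod.cong simp: inj_on_def)
  also have "(\<Prod>p\<in>(\<lambda>x. (x,w)) ` ?N. ?f p) = (\<Prod>x\<in>?N. \<beta> x w (ebc l E (h x, z)))"
    using wN by (subst prod.reindex) (auto intro!: prod.cong simp: inj_on_def)
  finally have P2: "(\<Prod>p\<in>ordered_edges EF. ?f p) = (\<Prod>p\<in>ordered_edges ?EF'. \<beta> (fst p) (snd p) (ebc l E (h (fst p), h (snd p))))
      * (\<Prod>x\<in>?N. \<beta> w x (ebc l E (z, h x)) * \<beta> x w (ebc l E (h x, z)))"
    by (simp add: prod.distrib)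
  show ?thesis unfolding W_def P1 P2 by (simp add: ac_simps)
qed

lemma Tot_elim:
  assumes gF: "is_graph VF EF" and w: "w \<in> VF" and gG: "is_graph V E"
  shows "Tot l V E VF EF \<alpha> \<beta> = (\<Sum>h\<in>homs (VF - {w}) {e\<in>EF. w \<notin> e} V E.
      W l E (VF - {w}) {e\<in>EF. w \<notin> e} \<alpha> \<beta> h *
      (\<Sum>z\<in>{z\<in>V. \<forall>x\<in>nbhd EF w. {h x, z} \<in> E}. \<alpha> w (vc l E z) *
          (\<Prod>x\<in>nbhd EF w. \<beta> w x (ebc l E (z, h x)) * \<beta> x w (ebc l E (h x, z)))))"
proof -
  let ?H = "homs (VF - {w}) {e\<in>EF. w \<notin> e} V E"
  let ?C = "\<lambda>h. {z\<in>V. \<forall>x\<in>nbhd EF w. {h x, z} \<in> E}"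
  have finV: "finite V" using gG graph_finite by blast
  have finH: "finite ?H" using homs_finite finV gF graph_finite by blast
  have "Tot l V E VF EF \<alpha> \<beta> = (\<Sum>g\<in>(\<lambda>(h,z). h(w:=z)) ` Sigma ?H ?C. W l E VF EF \<alpha> \<beta> g)"
    unfolding Tot_def homs_decomp[OF gF w] ..
  also have "\<dots> = (\<Sum>p\<in>Sigma ?H ?C. W l E VF EF \<alpha> \<beta> ((\<lambda>(h,z). h(w:=z)) p))"
    by (rule sum.reindex[OF homs_decomp_inj, simplified o_def])
  also have "\<dots> = (\<Sum>h\<in>?H. \<Sum>z\<in>?C h. W l E VF EF \<alpha> \<beta> (h(w:=z)))"
    using sum.Sigma[OF finH, of ?C "\<lambda>h z. W l E VF EF \<alpha> \<beta> (h(w:=z))"] finV by (simp add: split_def)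
  also have "\<dots> = (\<Sum>h\<in>?H. W l E (VF - {w}) {e\<in>EF. w \<notin> e} \<alpha> \<beta> h *
      (\<Sum>z\<in>?C h. \<alpha> w (vc l E z) *
          (\<Prod>x\<in>nbhd EF w. \<beta> w x (ebc l E (z, h x)) * \<beta> x w (ebc l E (h x, z)))))"
    by (simp add: W_decomp[OF gF w] sum_distrib_left)
  finally show ?thesis .
qed

lemma W_mult_vertex:
  assumes "finite VF" "x \<in> VF"
  shows "W L E VF EF (\<lambda>y m. \<alpha> y m * (if y = x then g m else 1)) \<beta> h = W L E VF EF \<alpha> \<beta> h * g (vc L E (h x))"
proof -
  have "(\<Prod>y\<in>VF. \<alpha> y (vc L E (h y)) * (if y = x then g (vc L E (h y)) else 1))
      = (\<Prod>y\<in>VF. \<alpha> y (vc L E (h y))) * g (vc L E (h x))"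
    using assms by (simp add: prod.distrib)
  then show ?thesis unfolding W_def by (simp add: ac_simps)
qed

lemma W_mult_edge:
  assumes "finite (ordered_edges EF)" "(x,y) \<in> ordered_edges EF"
  shows "W L E VF EF \<alpha> (\<lambda>a b c. \<beta> a b c * (if a = x \<and> b = y then g c else 1)) h
     = W L E VF EF \<alpha> \<beta> h * g (ebc L E (h x, h y))"
proof -
  let ?G = "\<lambda>p. g (ebc L E (h (fst p), h (snd p)))"
  have eq: "(\<lambda>p. if fst p = x \<and> snd p = y then ?G p else 1) = (\<lambda>p. if p = (x,y) then ?G p else 1)"
    by (auto simp: fun_eq_iff prod_eq_iff)
  have "(\<Prod>p\<in>ordered_edges EF. if fst p = x \<and> snd p = y then ?G p else 1) = ?G (x,y)"
    unfolding eq using assms by simp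
  then have "(\<Prod>p\<in>ordered_edges EF. \<beta> (fst p) (snd p) (ebc L E (h (fst p), h (snd p))) *
       (if fst p = x \<and> snd p = y then ?G p else 1))
     = (\<Prod>p\<in>ordered_edges EF. \<beta> (fst p) (snd p) (ebc L E (h (fst p), h (snd p)))) * g (ebc L E (h x, h y))"
    by (simp add: prod.distrib)
  then show ?thesis unfolding W_def by (simp add: ac_simps)
qed

lemma no_isolated_nbhd:
  assumes "no_isolated V E" "u \<in> V"
  shows "nbhd E u \<noteq> {}"
proof -
  obtain v where "{v,u} \<in> E" using assms unfolding no_isolated_def by blast
  then have "v \<in> nbhd E u" unfolding nbhd_def by (simp add: insert_commute)
  then show ?thesis by blast
qed

lemma oe_Sigma: "is_graph V E \<Longrightarrow> ordered_edges E = Sigma V (nbhd E)"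
  unfolding ordered_edges_def nbhd_def using edge_props by fastforce

lemma size_vc: "is_graph V E \<Longrightarrow> size (vc l E u) = card (nbhd E u)"
  unfolding vc_def by simp

lemma vsum:
  assumes g: "is_graph V E" and ni: "no_isolated V E"
  shows "real (\<Sum>z\<in>V. f (vc l E z)) =
    (\<Sum>c\<in># eb_multiset (Suc l) E. real (f (cc2 c)) / real (size (cc2 c)))"
proof -
  have finV: "finite V" using g graph_finite by blast
  have "(\<Sum>c\<in># eb_multiset (Suc l) E. real (f (cc2 c)) / real (size (cc2 c)))
     = (\<Sum>p\<in>ordered_edges E. real (f (cc2 (ebc (Suc l) E p))) / real (size (cc2 (ebc (Suc l) E p))))"
    unfolding eb_multiset_def by (simp add: sum_unfold_sum_mset multiset.map_comp o_def)
  also have "\<dots> = (\<Sum>p\<in>Sigma V (nbhd E). real (f (vc l E (fst p))) / real (card (nbhd E (fst p))))"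
    unfolding oe_Sigma[OF g]
    by (rule sum.cong[OF refl]) (auto simp: vc_def split: prod.splits)
  also have "\<dots> = (\<Sum>u\<in>V. \<Sum>v\<in>nbhd E u. real (f (vc l E u)) / real (card (nbhd E u)))"
    using sum.Sigma[OF finV, of "nbhd E" "\<lambda>u v. real (f (vc l E u)) / real (card (nbhd E u))"]
      nbhd_finite[OF g] by (simp add: split_def)
  also have "\<dots> = (\<Sum>u\<in>V. real (f (vc l E u)))"
  proof (rule sum.cong[OF refl])
    fix u assume "u \<in> V"
    then have "card (nbhd E u) > 0" using no_isolated_nbhd[OF ni] nbhd_finite[OF g]
      by (simp add: card_gt_0_iff)
    then show "(\<Sum>v\<in>nbhd E u. real (f (vc l E u)) / real (card (nbhd E u))) = real (f (vc l E u))"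
      by simp
  qed
  finally show ?thesis by simp
qed

lemma vsum_eq:
  fixes f :: "color multiset \<Rightarrow> nat"
  assumes "is_graph V E" "no_isolated V E" "is_graph V' E'" "no_isolated V' E'"
    "eb_multiset (Suc l) E = eb_multiset (Suc l) E'"
  shows "(\<Sum>z\<in>V. f (vc l E z)) = (\<Sum>z\<in>V'. f (vc l E' z))"
proof -
  have "real (\<Sum>z\<in>V. f (vc l E z)) = real (\<Sum>z\<in>V'. f (vc l E' z))"
    using vsum[OF assms(1,2)] vsum[OF assms(3,4)] assms(5) by simp
  then show ?thesis by linarith
qed

definition g1 :: "('c \<Rightarrow> color multiset \<Rightarrow> nat) \<Rightarrow> ('c \<Rightarrow> 'c \<Rightarrow> color \<Rightarrow> nat) \<Rightarrow> 'c \<Rightarrow> 'c \<Rightarrow> color multiset \<Rightarrow> nat" where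
  "g1 \<alpha> \<beta> w x m = (\<Sum>c\<in>#m. \<alpha> w (cc4 c) * (\<beta> w x (crev (proj c)) * \<beta> x w (proj c)))"

definition g2 :: "('c \<Rightarrow> color multiset \<Rightarrow> nat) \<Rightarrow> ('c \<Rightarrow> 'c \<Rightarrow> color \<Rightarrow> nat) \<Rightarrow> 'c \<Rightarrow> 'c \<Rightarrow> 'c \<Rightarrow> color \<Rightarrow> nat" where
  "g2 \<alpha> \<beta> w x y c = (\<Sum>p\<in># cc3 c. \<alpha> w (cc4 (fst p)) * (\<beta> w x (crev (proj (fst p))) * \<beta> x w (proj (fst p)))
       * (\<beta> w y (crev (proj (snd p))) * \<beta> y w (proj (snd p))))"

lemma inner1:
  assumes g: "is_graph V E"
  shows "(\<Sum>z\<in>{z\<in>V. \<forall>x'\<in>{x}. {h x', z} \<in> E}. \<alpha> w (vc l E z) *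
          (\<Prod>x'\<in>{x}. \<beta> w x' (ebc l E (z, h x')) * \<beta> x' w (ebc l E (h x', z))))
     = g1 \<alpha> \<beta> w x (vc (Suc l) E (h x))"
proof -
  have s: "{z\<in>V. \<forall>x'\<in>{x}. {h x', z} \<in> E} = nbhd E (h x)"
    using nbhd_subset[OF g] unfolding nbhd_def by auto
  show ?thesis unfolding s g1_def vc_def
    by (simp add: sum_unfold_sum_mset multiset.map_comp o_def ebc_rev[symmetric] vc_def)
qed

lemma inner2:
  assumes g: "is_graph V E" and xy: "x \<noteq> y"
  shows "(\<Sum>z\<in>{z\<in>V. \<forall>x'\<in>{x,y}. {h x', z} \<in> E}. \<alpha> w (vc l E z) *
          (\<Prod>x'\<in>{x,y}. \<beta> w x' (ebc l E (z, h x')) * \<beta> x' w (ebc l E (h x', z))))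
     = g2 \<alpha> \<beta> w x y (ebc (Suc (Suc l)) E (h x, h y))"
proof -
  have s: "{z\<in>V. \<forall>x'\<in>{x,y}. {h x', z} \<in> E} = nbhd E (h x) \<inter> nbhd E (h y)"
    using nbhd_subset[OF g] unfolding nbhd_def by auto
  show ?thesis unfolding s g2_def ebc_cc3 using xy
    by (simp add: sum_unfold_sum_mset multiset.map_comp o_def ebc_rev[symmetric] vc_def ac_simps)
qed

lemma is_graph_del:
  assumes g: "is_graph VF EF"
  shows "is_graph (VF - {w}) {e\<in>EF. w \<notin> e}"
proof -
  have "\<forall>e\<in>EF. \<exists>u v. e = {u, v} \<and> u \<noteq> v \<and> u \<in> VF \<and> v \<in> VF" "finite VF"
    using g unfolding is_graph_def by simp_all
  have "\<exists>u v. e = {u, v} \<and> u \<noteq> v \<and> u \<in> VF - {w} \<and> v \<in> VF - {w}" if e: "e \<in> EF" "w \<notin> e" for e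
  proof -
    obtain u v where "e = {u, v}" "u \<noteq> v" "u \<in> VF" "v \<in> VF"
      using \<open>\<forall>e\<in>EF. _\<close>[rule_format, OF e(1)] by blast
    then show ?thesis using e(2) by blast
  qed
  then show ?thesis unfolding is_graph_def using \<open>finite VF\<close> by simp
qed

lemma Tot_step0:
  assumes gF: "is_graph VF EF" and w: "w \<in> VF" and gG: "is_graph V E" and N: "nbhd EF w = {}"
  shows "Tot l V E VF EF \<alpha> \<beta> = Tot l V E (VF - {w}) {e\<in>EF. w \<notin> e} \<alpha> \<beta> * (\<Sum>z\<in>V. \<alpha> w (vc l E z))"
  unfolding Tot_elim[OF gF w gG] N unfolding Tot_def by (simp add: sum_distrib_right)

lemma Tot_step1:
  assumes gF: "is_graph VF EF" and w: "w \<in> VF" and gG: "is_graph V E" and N: "nbhd EF w = {x}"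
  shows "Tot l V E VF EF \<alpha> \<beta> = Tot (Suc l) V E (VF - {w}) {e\<in>EF. w \<notin> e}
     (\<lambda>y m. \<alpha> y (image_mset proj m) * (if y = x then g1 \<alpha> \<beta> w x m else 1)) (\<lambda>a b c. \<beta> a b (proj c))"
proof -
  have x: "x \<in> VF - {w}" using N edge_props[OF gF] unfolding nbhd_def by blast
  have fin: "finite (VF - {w})" using gF graph_finite by blast
  show ?thesis
    unfolding Tot_elim[OF gF w gG] N inner1[OF gG] unfolding Tot_def
    by (rule sum.cong[OF refl], subst W_mult_vertex[OF fin x], subst W_lift, rule refl)
qed

lemma Tot_step2:
  assumes gF: "is_graph VF EF" and w: "w \<in> VF" and gG: "is_graph V E" and N: "nbhd EF w = {x,y}"
    and xy: "x \<noteq> y" and exy: "{x,y} \<in> EF"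
  shows "Tot l V E VF EF \<alpha> \<beta> = Tot (Suc (Suc l)) V E (VF - {w}) {e\<in>EF. w \<notin> e}
     (\<lambda>a m. \<alpha> a (image_mset proj (image_mset proj m)))
     (\<lambda>a b c. \<beta> a b (proj (proj c)) * (if a = x \<and> b = y then g2 \<alpha> \<beta> w x y c else 1))"
proof -
  have "x \<in> VF" "y \<in> VF" "x \<noteq> w" "y \<noteq> w" using N edge_props[OF gF] unfolding nbhd_def by blast+
  then have oe: "(x,y) \<in> ordered_edges {e\<in>EF. w \<notin> e}" using exy unfolding ordered_edges_def by simp
  have gF': "is_graph (VF - {w}) {e\<in>EF. w \<notin> e}" using is_graph_del[OF gF] .
  have fin: "finite (ordered_edges {e\<in>EF. w \<notin> e})" using oe_finite[OF gF'] .
  have W2: "W l E VF' EF' \<alpha> \<beta> h = W (Suc (Suc l)) E VF' EF' (\<lambda>a m. \<alpha> a (image_mset proj (image_mset proj m)))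
     (\<lambda>a b c. \<beta> a b (proj (proj c))) h" for VF' EF' h
    by (subst W_lift, subst W_lift, rule refl)
  show ?thesis
    unfolding Tot_elim[OF gF w gG] N inner2[OF gG xy] unfolding Tot_def
    by (rule sum.cong[OF refl], subst W_mult_edge[OF fin oe], subst W2, rule refl)
qed

definition good :: "'c set \<Rightarrow> 'c set set \<Rightarrow> bool" where
  "good VF EF \<longleftrightarrow> is_graph VF EF \<and> chordal VF EF \<and>
     (\<exists>VT ET bag. is_tree_decomposition VF EF VT ET bag \<and> (\<forall>t\<in>VT. card (bag t) \<le> 3))"

definition s2 :: "'c set set \<Rightarrow> 'c \<Rightarrow> bool" where
  "s2 EF w \<longleftrightarrow> card (nbhd EF w) \<le> 2 \<and> (\<forall>a\<in>nbhd EF w. \<forall>b\<in>nbhd EF w. a \<noteq> b \<longrightarrow> {a,b} \<in> EF)"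

lemma no_loop: "is_graph V E \<Longrightarrow> {x} \<notin> E"
  using edge_props[of V E x x] by (metis insert_absorb2)

lemma all_less_4: "(\<forall>i<(4::nat). P i) \<longleftrightarrow> P 0 \<and> P 1 \<and> P 2 \<and> P 3"
proof -
  have "{..<(4::nat)} = {0,1,2,3}" by auto
  then show ?thesis by (metis insert_iff lessThan_iff singletonD)
qed

lemma all_less_S4: "(\<forall>i<Suc (Suc (Suc (Suc 0))). P i) \<longleftrightarrow> P 0 \<and> P 1 \<and> P 2 \<and> P 3"
  using all_less_4[of P] by (simp add: numeral_eq_Suc)

lemma four_cycle:
  assumes g: "is_graph VF EF" and d: "distinct [a,b,c,d]" and s: "{a,b,c,d} \<subseteq> VF"
    and e: "{a,b} \<in> EF" "{b,c} \<in> EF" "{c,d} \<in> EF" "{d,a} \<in> EF"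
    and ne: "{a,c} \<notin> EF" "{b,d} \<notin> EF"
  shows "\<not> chordal VF EF"
proof -
  have nl: "\<And>x. {x} \<notin> EF" using no_loop[OF g] .
  have ne': "{c,a} \<notin> EF" "{d,b} \<notin> EF" using ne by (simp_all add: insert_commute)
  have e': "{b,a} \<in> EF" "{c,b} \<in> EF" "{d,c} \<in> EF" "{a,d} \<in> EF" using e by (simp_all add: insert_commute)
  have "is_cycle VF EF [a,b,c,d]"
    unfolding is_cycle_def using d s e by (simp add: all_less_4 all_less_S4)
  moreover have "\<forall>i<length [a,b,c,d]. \<forall>j<length [a,b,c,d]. {[a,b,c,d] ! i, [a,b,c,d] ! j} \<in> EF \<longrightarrow>
        j = (i + 1) mod length [a,b,c,d] \<or> i = (j + 1) mod length [a,b,c,d]"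
    using nl ne ne' by (simp add: all_less_4 all_less_S4)
  ultimately have "is_induced_cycle VF EF [a,b,c,d]" unfolding is_induced_cycle_def by blast
  then show ?thesis unfolding chordal_def by force
qed

lemma chordal_del:
  assumes "chordal VF EF"
  shows "chordal (VF - {w}) {e\<in>EF. w \<notin> e}"
  unfolding chordal_def
proof
  assume "\<exists>vs. 4 \<le> length vs \<and> is_induced_cycle (VF - {w}) {e \<in> EF. w \<notin> e} vs"
  then obtain vs where l: "4 \<le> length vs" and c: "is_induced_cycle (VF - {w}) {e \<in> EF. w \<notin> e} vs" by blast
  have "is_induced_cycle VF EF vs"
    unfolding is_induced_cycle_def
  proof (intro conjI allI impI)
    show "is_cycle VF EF vs" using c unfolding is_induced_cycle_def is_cycle_def by auto
  next
    fix i j assume ij: "i < length vs" "j < length vs" "{vs ! i, vs ! j} \<in> EF"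
    have "vs ! i \<noteq> w" "vs ! j \<noteq> w" using c ij(1,2) unfolding is_induced_cycle_def is_cycle_def
      by (meson DiffD2 nth_mem singletonI subsetD)+
    then have "{vs ! i, vs ! j} \<in> {e \<in> EF. w \<notin> e}" using ij(3) by simp
    then show "j = (i + 1) mod length vs \<or> i = (j + 1) mod length vs"
      using c ij(1,2) unfolding is_induced_cycle_def by blast
  qed
  then show False using assms l unfolding chordal_def by blast
qed

lemma td_restrict:
  assumes td: "is_tree_decomposition VF EF VT ET bag"
    and e: "\<forall>e\<in>EF'. \<exists>t\<in>VT. e \<subseteq> bag t - {v}"
  shows "is_tree_decomposition (VF - {v}) EF' VT ET (\<lambda>t. bag t - {v})"
proof -
  have "{t \<in> VT. u \<in> bag t - {v}} = {t \<in> VT. u \<in> bag t}" if "u \<in> VF - {v}" for u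
    using that by auto
  then show ?thesis using td e unfolding is_tree_decomposition_def by auto
qed

lemma td_card:
  assumes "is_tree_decomposition VF EF VT ET bag" "is_graph VF EF" "t \<in> VT"
  shows "card (bag t - {v}) \<le> card (bag t)"
proof -
  have "finite (bag t)" using assms unfolding is_tree_decomposition_def
    by (meson finite_subset graph_finite)
  then show ?thesis by (simp add: card_mono)
qed

lemma good_del: "good VF EF \<Longrightarrow> good (VF - {w}) {e\<in>EF. w \<notin> e}"
proof -
  assume gd: "good VF EF"
  have g: "is_graph VF EF" and ch: "chordal VF EF" using gd unfolding good_def by simp_all
  obtain VT ET bag where td: "is_tree_decomposition VF EF VT ET bag" and c3: "\<forall>t\<in>VT. card (bag t) \<le> 3"
    using gd unfolding good_def by metis
  have "\<forall>e\<in>{e\<in>EF. w \<notin> e}. \<exists>t\<in>VT. e \<subseteq> bag t - {w}"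
  proof
    fix e assume e: "e \<in> {e\<in>EF. w \<notin> e}"
    then obtain t where "t \<in> VT" "e \<subseteq> bag t" using td unfolding is_tree_decomposition_def by auto
    then show "\<exists>t\<in>VT. e \<subseteq> bag t - {w}" using e by blast
  qed
  then have td': "is_tree_decomposition (VF - {w}) {e\<in>EF. w \<notin> e} VT ET (\<lambda>t. bag t - {w})"
    by (rule td_restrict[OF td])
  have "\<forall>t\<in>VT. card (bag t - {w}) \<le> 3"
  proof
    fix t assume t: "t \<in> VT"
    have "card (bag t) \<le> 3" using c3 t by blast
    then show "card (bag t - {w}) \<le> 3" using td_card[OF td g t, of w] by linarith
  qed
  with td' have "\<exists>VT ET bag. is_tree_decomposition (VF - {w}) {e\<in>EF. w \<notin> e} VT ET bag \<and> (\<forall>t\<in>VT. card (bag t) \<le> 3)"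
    by blast
  then show ?thesis unfolding good_def using is_graph_del[OF g] chordal_del[OF ch] by simp
qed

lemma graph_edge_sub: "is_graph V E \<Longrightarrow> e \<in> E \<Longrightarrow> e \<subseteq> V"
proof -
  assume g: "is_graph V E" and e: "e \<in> E"
  have "\<forall>e\<in>E. \<exists>u v. e = {u, v} \<and> u \<noteq> v \<and> u \<in> V \<and> v \<in> V"
    using g unfolding is_graph_def by simp
  from this[rule_format, OF e] show "e \<subseteq> V" by auto
qed

lemma treewidth_good:
  assumes g: "is_graph VF EF" and ch: "chordal VF EF" and tw: "treewidth VF EF \<le> 2"
  shows "good VF EF"
proof -
  let ?P = "\<lambda>k. \<exists>VT ET bag. is_tree_decomposition VF EF VT ET bag \<and> decomposition_width VT bag = k"
  have nc: "\<not> is_cycle {0::nat} {} vs" for vs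
  proof
    assume "is_cycle {0::nat} {} vs"
    then have "length vs \<ge> 3" "\<forall>i < length vs. {vs ! i, vs ! ((i + 1) mod length vs)} \<in> ({}::nat set set)"
      unfolding is_cycle_def by simp_all
    then show False by (metis empty_iff gr0I not_numeral_le_zero)
  qed
  have tree0: "is_tree {0::nat} {}"
    unfolding is_tree_def using nc by (simp add: is_graph_def connected_in_def)
  have e0: "\<forall>e\<in>EF. \<exists>t\<in>{0::nat}. e \<subseteq> VF" using graph_edge_sub[OF g] by blast
  have c0: "\<forall>v\<in>VF. connected_in {} {t \<in> {0::nat}. v \<in> VF}" unfolding connected_in_def by simp
  have "is_tree_decomposition VF EF {0} {} (\<lambda>_. VF)"
    unfolding is_tree_decomposition_def using tree0 e0 c0 by simp
  then have "?P (decomposition_width {0} (\<lambda>_. VF))" by blast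
  then have "?P (treewidth VF EF)" unfolding treewidth_def by (rule LeastI)
  then obtain VT ET bag where td: "is_tree_decomposition VF EF VT ET bag"
    and wd: "decomposition_width VT bag = treewidth VF EF" by blast
  have "is_graph VT ET" using td unfolding is_tree_decomposition_def is_tree_def by simp
  then have finT: "finite VT" by (rule graph_finite)
  have "card (bag t) \<le> 3" if "t \<in> VT" for t
  proof -
    have "card (bag t) \<le> Max ((\<lambda>t. card (bag t)) ` VT)" using finT that by simp
    moreover have "Max ((\<lambda>t. card (bag t)) ` VT) - 1 \<le> 2" using wd tw unfolding decomposition_width_def by simp
    ultimately show ?thesis by linarith
  qed
  then show ?thesis unfolding good_def using g ch td by blast
qed

lemma tree_leaf:
  assumes tr: "is_tree VT ET"
  shows "\<exists>t\<in>VT. \<forall>u w. {t,u} \<in> ET \<longrightarrow> {t,w} \<in> ET \<longrightarrow> u = w"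
proof (rule ccontr)
  assume "\<not> ?thesis"
  then have H: "\<forall>t\<in>VT. \<exists>u w. {t,u} \<in> ET \<and> {t,w} \<in> ET \<and> u \<noteq> w" by blast
  have g: "is_graph VT ET" and ne: "VT \<noteq> {}" and nc: "\<not> (\<exists>vs. is_cycle VT ET vs)"
    using tr unfolding is_tree_def by simp_all
  have fin: "finite VT" using g graph_finite by blast
  obtain t0 where t0: "t0 \<in> VT" using ne by blast
  have nx: "\<exists>u. {t,u} \<in> ET \<and> u \<noteq> p" if "t \<in> VT" for t p
  proof -
    from H[rule_format, OF that] obtain u w where uw: "{t,u} \<in> ET" "{t,w} \<in> ET" "u \<noteq> w" by blast
    show ?thesis
    proof (cases "u = p")
      case True
      then have "w \<noteq> p" using uw(3) by simp
      then show ?thesis using uw(2) by blast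
    next
      case False
      then show ?thesis using uw(1) by blast
    qed
  qed
  obtain t1 where t1: "{t0,t1} \<in> ET" using nx[OF t0] by blast
  define nxt where "nxt = (\<lambda>t p. SOME u. {t,u} \<in> ET \<and> u \<noteq> p)"
  define gg :: "nat \<Rightarrow> _" where "gg = rec_nat (t0,t1) (\<lambda>_ q. (snd q, nxt (snd q) (fst q)))"
  have gg0: "gg 0 = (t0,t1)" and ggS: "gg (Suc k) = (snd (gg k), nxt (snd (gg k)) (fst (gg k)))" for k
    unfolding gg_def by simp_all
  have inv: "{fst (gg k), snd (gg k)} \<in> ET" for k
  proof (induction k)
    case 0 then show ?case using t1 gg0 by simp
  next
    case (Suc k)
    have "snd (gg k) \<in> VT" using edge_props[OF g Suc] by blast
    then have "{snd (gg k), nxt (snd (gg k)) (fst (gg k))} \<in> ET \<and> nxt (snd (gg k)) (fst (gg k)) \<noteq> fst (gg k)"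
      unfolding nxt_def by (rule someI_ex[OF nx])
    then show ?case using ggS by simp
  qed
  define f where "f k = fst (gg k)" for k
  have fS: "f (Suc k) = snd (gg k)" for k unfolding f_def ggS by simp
  have fE: "{f k, f (Suc k)} \<in> ET" for k using inv fS f_def by simp
  have fV: "f k \<in> VT" for k using edge_props[OF g fE[of k]] by blast
  have f1: "f (Suc k) \<noteq> f k" for k using edge_props[OF g fE[of k]] by metis
  have f2: "f (Suc (Suc k)) \<noteq> f k" for k
  proof -
    have "snd (gg k) \<in> VT" using edge_props[OF g inv[of k]] by blast
    then have "nxt (snd (gg k)) (fst (gg k)) \<noteq> fst (gg k)"
      unfolding nxt_def using someI_ex[OF nx] by blast
    then show ?thesis unfolding f_def ggS by simp
  qed
  have "\<not> inj f"
  proof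
    assume inj: "inj f"
    have "range f \<subseteq> VT" using fV by blast
    then have "finite (range f)" using fin by (rule finite_subset)
    then have "finite (UNIV :: nat set)" using inj by (rule finite_imageD)
    then show False by simp
  qed
  then obtain i j where ij: "i \<noteq> j" "f i = f j" unfolding inj_def by blast
  have ex: "\<exists>j. \<exists>i<j. f i = f j"
  proof (cases "i < j")
    case True then show ?thesis using ij by blast
  next
    case False then have "j < i" using ij(1) by simp
    then show ?thesis using ij(2) by metis
  qed
  define j0 where "j0 = (LEAST j. \<exists>i<j. f i = f j)"
  obtain i0 where i0: "i0 < j0" "f i0 = f j0" using LeastI_ex[OF ex] unfolding j0_def by blast
  have minj: "f a \<noteq> f b" if "a < b" "b < j0" for a b
    using not_less_Least[of b "\<lambda>j. \<exists>i<j. f i = f j"] that unfolding j0_def by blast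
  define vs where "vs = map f [i0..<j0]"
  define n where "n = j0 - i0"
  have ln: "length vs = n" unfolding vs_def n_def by simp
  have vsk: "vs ! k = f (i0 + k)" if "k < n" for k unfolding vs_def using that n_def by simp
  have "n \<noteq> 1"
  proof
    assume "n = 1"
    then have "j0 = Suc i0" using i0 unfolding n_def by simp
    then show False using f1[of i0] i0 by simp
  qed
  moreover have "n \<noteq> 2"
  proof
    assume "n = 2"
    then have "j0 = Suc (Suc i0)" using i0 unfolding n_def by simp
    then show False using f2[of i0] i0 by simp
  qed
  moreover have "n \<noteq> 0" using i0 unfolding n_def by simp
  ultimately have n3: "n \<ge> 3" by linarith
  have dist: "distinct vs" unfolding vs_def
  proof (rule distinct_map[THEN iffD2], intro conjI)
    show "inj_on f (set [i0..<j0])"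
    proof (rule inj_onI)
      fix a b assume "a \<in> set [i0..<j0]" "b \<in> set [i0..<j0]" "f a = f b"
      then have ab: "a < j0" "b < j0" "f a = f b" by auto
      show "a = b"
      proof (rule ccontr)
        assume "a \<noteq> b"
        then consider "a < b" | "b < a" by linarith
        then show False
        proof cases
          case 1 then show False using minj[of a b] ab by simp
        next
          case 2 then show False using minj[of b a] ab by simp
        qed
      qed
    qed
  qed simp
  have sub: "set vs \<subseteq> VT" unfolding vs_def using fV by auto
  have edges: "\<forall>k < length vs. {vs ! k, vs ! ((k + 1) mod length vs)} \<in> ET"
  proof (intro allI impI)
    fix k assume k: "k < length vs"
    show "{vs ! k, vs ! ((k + 1) mod length vs)} \<in> ET"
    proof (cases "k + 1 < n")
      case True
      then show ?thesis using vsk[of k] vsk[of "k+1"] fE[of "i0 + k"] ln by simp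
    next
      case False
      then have "k + 1 = n" using k ln by simp
      then have "(k + 1) mod length vs = 0" "i0 + k + 1 = j0" using ln n_def i0 by auto
      then show ?thesis using vsk[of k] vsk[of 0] fE[of "i0 + k"] i0 k ln n3 by simp
    qed
  qed
  have "is_cycle VT ET vs" unfolding is_cycle_def using n3 ln dist sub edges by simp
  then show False using nc by blast
qed

lemma conn_remove:
  assumes c: "connected_in ET S" and uq: "\<forall>u w. {t,u} \<in> ET \<longrightarrow> {t,w} \<in> ET \<longrightarrow> u = w"
  shows "connected_in {e\<in>ET. t \<notin> e} (S - {t})"
  unfolding connected_in_def
proof (intro ballI)
  fix a b assume a: "a \<in> S - {t}" and b: "b \<in> S - {t}"
  let ?R = "\<lambda>x y. x \<in> S \<and> y \<in> S \<and> {x, y} \<in> ET"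
  let ?R' = "\<lambda>x y. x \<in> S - {t} \<and> y \<in> S - {t} \<and> {x, y} \<in> {e\<in>ET. t \<notin> e}"
  have r: "?R\<^sup>*\<^sup>* a b" using c a b unfolding connected_in_def by blast
  have "(c \<noteq> t \<longrightarrow> ?R'\<^sup>*\<^sup>* a c) \<and> (c = t \<longrightarrow> (\<exists>s. s \<noteq> t \<and> s \<in> S \<and> {t,s} \<in> ET \<and> ?R'\<^sup>*\<^sup>* a s))"
    if "?R\<^sup>*\<^sup>* a c" for c
    using that
  proof (induction rule: rtranclp_induct)
    case base
    then show ?case using a by simp
  next
    case (step c d)
    show ?case
    proof (cases "c = t")
      case True
      then obtain s where s: "s \<noteq> t" "s \<in> S" "{t,s} \<in> ET" "?R'\<^sup>*\<^sup>* a s" using step.IH by blast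
      show ?thesis
      proof (cases "d = t")
        case True then show ?thesis using s by blast
      next
        case False
        have "{t,d} \<in> ET" using step.hyps(2) \<open>c = t\<close> by simp
        then have "d = s" using uq s(3) by blast
        then show ?thesis using s False by simp
      qed
    next
      case False
      then have ac: "?R'\<^sup>*\<^sup>* a c" using step.IH by blast
      show ?thesis
      proof (cases "d = t")
        case True
        have "{t,c} \<in> ET" using step.hyps(2) True by (simp add: insert_commute)
        then show ?thesis using True False ac step.hyps(2) by blast
      next
        case dF: False
        have "?R' c d" using step.hyps(2) False dF by simp
        then show ?thesis using dF rtranclp.rtrancl_into_rtrancl[OF ac] by blast
      qed
    qed
  qed
  then show "?R'\<^sup>*\<^sup>* a b" using r b by blast
qed

lemma only_bag:
  assumes td: "is_tree_decomposition VF EF VT ET bag" and t: "t \<in> VT" and v: "v \<in> bag t"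
    and nb: "\<forall>u. {t,u} \<in> ET \<longrightarrow> v \<notin> bag u" and t': "t' \<in> VT" "v \<in> bag t'"
  shows "t' = t"
proof (rule ccontr)
  assume ne: "t' \<noteq> t"
  have vF: "v \<in> VF" using td t v unfolding is_tree_decomposition_def by blast
  let ?S = "{t \<in> VT. v \<in> bag t}"
  let ?R = "\<lambda>x y. x \<in> ?S \<and> y \<in> ?S \<and> {x, y} \<in> ET"
  have "connected_in ET ?S" using td vF unfolding is_tree_decomposition_def by blast
  then have "?R\<^sup>*\<^sup>* t t'" using t v t' unfolding connected_in_def by blast
  then show False
  proof (cases rule: converse_rtranclpE)
    case base then show False using ne by simp
  next
    case (step b)
    then have "{t,b} \<in> ET" "v \<in> bag b" by simp_all
    then show False using nb by blast
  qed
qed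

lemma edge_nonempty: "is_graph V E \<Longrightarrow> e \<in> E \<Longrightarrow> e \<noteq> {}"
proof -
  assume g: "is_graph V E" and e: "e \<in> E"
  have "\<forall>e\<in>E. \<exists>u v. e = {u, v} \<and> u \<noteq> v \<and> u \<in> V \<and> v \<in> V"
    using g unfolding is_graph_def by simp
  from this[rule_format, OF e] show "e \<noteq> {}" by auto
qed

lemma leaf_vertex:
  "is_tree_decomposition VF EF VT ET bag \<Longrightarrow> is_graph VF EF \<Longrightarrow> VF \<noteq> {} \<Longrightarrow>
    \<exists>v\<in>VF. \<exists>t\<in>VT. v \<in> bag t \<and> nbhd EF v \<subseteq> bag t"
proof (induction "card VT" arbitrary: VT ET rule: less_induct)
  case less
  note td = less.prems(1) and g = less.prems(2) and ne = less.prems(3)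
  have tr: "is_tree VT ET" using td unfolding is_tree_decomposition_def by simp
  have gT: "is_graph VT ET" using tr unfolding is_tree_def by simp
  have finT: "finite VT" using gT graph_finite by blast
  have bsub: "\<forall>t\<in>VT. bag t \<subseteq> VF" and bun: "(\<Union>t\<in>VT. bag t) = VF"
    and bed: "\<forall>e\<in>EF. \<exists>t\<in>VT. e \<subseteq> bag t" and bcon: "\<forall>v\<in>VF. connected_in ET {t \<in> VT. v \<in> bag t}"
    using td unfolding is_tree_decomposition_def by simp_all
  obtain t where t: "t \<in> VT" and tl: "\<forall>u w. {t,u} \<in> ET \<longrightarrow> {t,w} \<in> ET \<longrightarrow> u = w"
    using tree_leaf[OF tr] by blast
  show ?case
  proof (cases "VT = {t}")
    case True
    then have "bag t = VF" using bun by simp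
    moreover obtain v where "v \<in> VF" using ne by blast
    moreover have "nbhd EF v \<subseteq> VF" using nbhd_subset[OF g] .
    ultimately show ?thesis using t by blast
  next
    case VTne: False
    show ?thesis
    proof (cases "\<exists>v\<in>bag t. \<forall>u. {t,u} \<in> ET \<longrightarrow> v \<notin> bag u")
      case True
      then obtain v where v: "v \<in> bag t" and nb: "\<forall>u. {t,u} \<in> ET \<longrightarrow> v \<notin> bag u" by blast
      have vF: "v \<in> VF" using bsub t v by blast
      have "nbhd EF v \<subseteq> bag t"
      proof
        fix u assume "u \<in> nbhd EF v"
        then have "{v,u} \<in> EF" unfolding nbhd_def by simp
        then obtain t' where t': "t' \<in> VT" "{v,u} \<subseteq> bag t'" using bed by blast
        then have "t' = t" using only_bag[OF td t v nb] by simp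
        then show "u \<in> bag t" using t' by simp
      qed
      then show ?thesis using vF v t by blast
    next
      case False
      then have cov: "\<forall>v\<in>bag t. \<exists>u. {t,u} \<in> ET \<and> v \<in> bag u" by blast
      let ?VT = "VT - {t}" and ?ET = "{e\<in>ET. t \<notin> e}"
      have nbT: "u \<in> ?VT" if "{t,u} \<in> ET" for u
        using edge_props[OF gT that] by blast
      have tr': "is_tree ?VT ?ET"
        unfolding is_tree_def
      proof (intro conjI)
        show "is_graph ?VT ?ET" by (rule is_graph_del[OF gT])
        show "?VT \<noteq> {}" using VTne t by blast
        have "connected_in ET VT" using tr unfolding is_tree_def by simp
        then show "connected_in ?ET ?VT" using conn_remove[OF _ tl] by simp
        show "\<not> (\<exists>vs. is_cycle ?VT ?ET vs)"
        proof
          assume "\<exists>vs. is_cycle ?VT ?ET vs"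
          then obtain vs where "is_cycle ?VT ?ET vs" by blast
          then have "is_cycle VT ET vs" unfolding is_cycle_def by auto
          then show False using tr unfolding is_tree_def by blast
        qed
      qed
      have un': "(\<Union>t'\<in>?VT. bag t') = VF"
      proof
        show "(\<Union>t'\<in>?VT. bag t') \<subseteq> VF" using bsub by blast
        show "VF \<subseteq> (\<Union>t'\<in>?VT. bag t')"
        proof
          fix x assume "x \<in> VF"
          then obtain t'' where t'': "t'' \<in> VT" "x \<in> bag t''" using bun by blast
          show "x \<in> (\<Union>t'\<in>?VT. bag t')"
          proof (cases "t'' = t")
            case True
            then obtain u where "{t,u} \<in> ET" "x \<in> bag u" using cov t'' by blast
            then show ?thesis using nbT by blast
          next
            case False then show ?thesis using t'' by blast
          qed
        qed
      qed
      have ed': "\<forall>e\<in>EF. \<exists>t'\<in>?VT. e \<subseteq> bag t'"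
      proof
        fix e assume e: "e \<in> EF"
        then obtain t'' where t'': "t'' \<in> VT" "e \<subseteq> bag t''" using bed by blast
        show "\<exists>t'\<in>?VT. e \<subseteq> bag t'"
        proof (cases "t'' = t")
          case True
          have "e \<noteq> {}" using edge_nonempty[OF g e] .
          then obtain a where a: "a \<in> e" by blast
          then obtain u where u: "{t,u} \<in> ET" "a \<in> bag u" using cov t'' True by blast
          have "e \<subseteq> bag u"
          proof
            fix b assume "b \<in> e"
            then obtain u' where "{t,u'} \<in> ET" "b \<in> bag u'" using cov t'' True by blast
            moreover have "u' = u" using tl u(1) \<open>{t,u'} \<in> ET\<close> by blast
            ultimately show "b \<in> bag u" by simp
          qed
          then show ?thesis using nbT[OF u(1)] by blast
        next
          case False then show ?thesis using t'' by blast
        qed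
      qed
      have con': "\<forall>v\<in>VF. connected_in ?ET {t' \<in> ?VT. v \<in> bag t'}"
      proof
        fix v assume "v \<in> VF"
        then have "connected_in ET {t' \<in> VT. v \<in> bag t'}" using bcon by blast
        then have "connected_in ?ET ({t' \<in> VT. v \<in> bag t'} - {t})" by (rule conn_remove[OF _ tl])
        moreover have "{t' \<in> VT. v \<in> bag t'} - {t} = {t' \<in> ?VT. v \<in> bag t'}" by blast
        ultimately show "connected_in ?ET {t' \<in> ?VT. v \<in> bag t'}" by simp
      qed
      have td': "is_tree_decomposition VF EF ?VT ?ET bag"
        unfolding is_tree_decomposition_def using tr' bsub un' ed' con' by blast
      have "card ?VT < card VT" by (rule card_Diff1_less[OF finT t])
      then obtain v t' where "v \<in> VF" "t' \<in> ?VT" "v \<in> bag t'" "nbhd EF v \<subseteq> bag t'"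
        using less.hyps[OF _ td' g ne] by auto
      then show ?thesis by blast
    qed
  qed
qed

lemma mod_cancel_nat:
  fixes m a b n :: nat
  assumes "(m + a) mod n = (m + b) mod n"
  shows "a mod n = b mod n"
proof (cases "n = 0")
  case True then show ?thesis using assms by simp
next
  case False
  have "(m + a + (n * m - m)) mod n = (m + b + (n * m - m)) mod n"
    using mod_add_cong[OF assms refl] .
  moreover have "m + a + (n * m - m) = a + n * m" "m + b + (n * m - m) = b + n * m"
    using False by (simp_all add: mult_le_mono1 less_eq_Suc_le) 
  ultimately show ?thesis by simp
qed

lemma rotate_induced:
  assumes c: "is_induced_cycle V E vs"
  shows "is_induced_cycle V E (rotate m vs)"
proof -
  let ?n = "length vs"
  have cy: "is_cycle V E vs" and ind: "\<forall>i<?n. \<forall>j<?n. {vs ! i, vs ! j} \<in> E \<longrightarrow>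
        j = (i + 1) mod ?n \<or> i = (j + 1) mod ?n"
    using c unfolding is_induced_cycle_def by simp_all
  have l3: "?n \<ge> 3" and dist: "distinct vs" and sub: "set vs \<subseteq> V"
    and ed: "\<forall>i < ?n. {vs ! i, vs ! ((i + 1) mod ?n)} \<in> E"
    using cy unfolding is_cycle_def by simp_all
  have n0: "?n > 0" using l3 by linarith
  have rk: "rotate m vs ! k = vs ! ((m + k) mod ?n)" if "k < ?n" for k
    using nth_rotate[OF that] .
  have "is_cycle V E (rotate m vs)"
    unfolding is_cycle_def
  proof (intro conjI allI impI)
    show "3 \<le> length (rotate m vs)" using l3 by simp
    show "distinct (rotate m vs)" using dist by simp
    show "set (rotate m vs) \<subseteq> V" using sub by simp
    fix k assume k: "k < length (rotate m vs)"
    then have k': "k < ?n" by simp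
    have i: "(m + k) mod ?n < ?n" using n0 by simp
    have "(m + (k + 1) mod ?n) mod ?n = ((m + k) mod ?n + 1) mod ?n"
      by (simp add: mod_add_right_eq mod_add_left_eq add.assoc mod_Suc_eq)
    then show "{rotate m vs ! k, rotate m vs ! ((k + 1) mod length (rotate m vs))} \<in> E"
      using ed[rule_format, OF i] rk[OF k'] rk[of "(k + 1) mod ?n"] n0 by simp
  qed
  moreover have "\<forall>i<length (rotate m vs). \<forall>j<length (rotate m vs).
      {rotate m vs ! i, rotate m vs ! j} \<in> E \<longrightarrow>
        j = (i + 1) mod length (rotate m vs) \<or> i = (j + 1) mod length (rotate m vs)"
  proof (intro allI impI)
    fix i j assume i: "i < length (rotate m vs)" and j: "j < length (rotate m vs)"
      and e: "{rotate m vs ! i, rotate m vs ! j} \<in> E"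
    have i': "i < ?n" and j': "j < ?n" using i j by simp_all
    have ii: "(m + i) mod ?n < ?n" and jj: "(m + j) mod ?n < ?n" using n0 by simp_all
    have "{vs ! ((m + i) mod ?n), vs ! ((m + j) mod ?n)} \<in> E" using e rk[OF i'] rk[OF j'] by simp
    then have "(m + j) mod ?n = ((m + i) mod ?n + 1) mod ?n \<or> (m + i) mod ?n = ((m + j) mod ?n + 1) mod ?n"
      using ind ii jj by blast
    then have "(m + j) mod ?n = (m + (i + 1)) mod ?n \<or> (m + i) mod ?n = (m + (j + 1)) mod ?n"
      by (simp add: mod_add_left_eq add.assoc mod_Suc_eq)
    then have "j mod ?n = (i + 1) mod ?n \<or> i mod ?n = (j + 1) mod ?n"
      using mod_cancel_nat by blast
    then show "j = (i + 1) mod length (rotate m vs) \<or> i = (j + 1) mod length (rotate m vs)"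
      using i' j' by simp
  qed
  ultimately show ?thesis unfolding is_induced_cycle_def by blast
qed


lemma core_append:
  assumes c: "is_induced_cycle (VF - {v}) ({e\<in>EF. v \<notin> e} \<union> {{a,b}}) ws"
    and g: "is_graph VF EF" and vF: "v \<in> VF" and N: "nbhd EF v = {a,b}" and nab: "{a,b} \<notin> EF"
    and w0: "ws ! 0 = b" and wl: "ws ! (length ws - 1) = a"
  shows "is_induced_cycle VF EF (ws @ [v])"
proof -
  let ?E' = "{e\<in>EF. v \<notin> e} \<union> {{a,b}}"
  let ?n = "length ws"
  let ?us = "ws @ [v]"
  have cy: "is_cycle (VF - {v}) ?E' ws" and ind: "\<forall>i<?n. \<forall>j<?n. {ws ! i, ws ! j} \<in> ?E' \<longrightarrow>
        j = (i + 1) mod ?n \<or> i = (j + 1) mod ?n"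
    using c unfolding is_induced_cycle_def by simp_all
  have l3: "?n \<ge> 3" and dist: "distinct ws" and sub: "set ws \<subseteq> VF - {v}"
    and ed: "\<forall>i < ?n. {ws ! i, ws ! ((i + 1) mod ?n)} \<in> ?E'"
    using cy unfolding is_cycle_def by simp_all
  have n0: "0 < ?n" and n1: "?n - 1 < ?n" using l3 by linarith+
  have idx: "k = l" if "k < ?n" "l < ?n" "ws ! k = ws ! l" for k l
    using nth_eq_iff_index_eq[OF dist that(1,2)] that(3) by simp
  have wsv: "ws ! k \<noteq> v" "ws ! k \<in> VF" if "k < ?n" for k
    using sub nth_mem[OF that] by auto
  have us1: "?us ! k = ws ! k" if "k < ?n" for k using that by (simp add: nth_append)
  have us2: "?us ! ?n = v" by simp
  have va: "{v,a} \<in> EF" and vb: "{v,b} \<in> EF" using N unfolding nbhd_def by blast+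
  have av: "{a,v} \<in> EF" and bv: "{b,v} \<in> EF" using va vb by (simp_all add: insert_commute)
  have nl: "\<And>z. {z} \<notin> EF" using no_loop[OF g] .
  have pairE: "{ws ! i, ws ! j} \<in> ?E'" if "i < ?n" "j < ?n" "{ws ! i, ws ! j} \<in> EF" for i j
    using that wsv[OF that(1)] wsv[OF that(2)] by simp
  have last0: "{ws ! (?n - 1), ws ! 0} \<notin> EF" "{ws ! 0, ws ! (?n - 1)} \<notin> EF"
    using nab w0 wl by (simp_all add: insert_commute)
  have indF: "j = (i + 1) mod (?n + 1) \<or> i = (j + 1) mod (?n + 1)"
    if ij: "i < ?n" "j < ?n" "{ws ! i, ws ! j} \<in> EF" for i j
  proof -
    have "j = (i + 1) mod ?n \<or> i = (j + 1) mod ?n" using ind pairE[OF ij] ij(1,2) by blast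
    then show ?thesis
    proof
      assume h: "j = (i + 1) mod ?n"
      show ?thesis
      proof (cases "i + 1 < ?n")
        case True then show ?thesis using h by simp
      next
        case False
        then have "i + 1 = ?n" using ij(1) by simp
        then have "i = ?n - 1" "j = 0" using h by simp_all
        then show ?thesis using ij(3) last0 by simp
      qed
    next
      assume h: "i = (j + 1) mod ?n"
      show ?thesis
      proof (cases "j + 1 < ?n")
        case True then show ?thesis using h by simp
      next
        case False
        then have "j + 1 = ?n" using ij(2) by simp
        then have "j = ?n - 1" "i = 0" using h by simp_all
        then show ?thesis using ij(3) last0 by simp
      qed
    qed
  qed
  have nbv: "k = ?n - 1 \<or> k = 0" if "k < ?n" "{v, ws ! k} \<in> EF" for k
  proof -
    have "ws ! k \<in> {a,b}" using that(2) N unfolding nbhd_def by blast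
    then show ?thesis
    proof
      assume "ws ! k = a"
      then have "ws ! k = ws ! (?n - 1)" using wl by simp
      moreover have "?n - 1 < ?n" using l3 by linarith
      ultimately have "k = ?n - 1" using idx[OF that(1)] by blast
      then show ?thesis by simp
    next
      assume "ws ! k \<in> {b}"
      then have "ws ! k = ws ! 0" using w0 by simp
      moreover have "0 < ?n" using l3 by linarith
      ultimately have "k = 0" using idx[OF that(1)] by blast
      then show ?thesis by simp
    qed
  qed
  have "is_cycle VF EF ?us"
    unfolding is_cycle_def
  proof (intro conjI allI impI)
    show "3 \<le> length ?us" using l3 by simp
    show "distinct ?us" using dist sub by auto
    show "set ?us \<subseteq> VF" using sub vF by auto
    fix k assume k: "k < length ?us"
    consider (a) "k + 1 < ?n" | (b) "k = ?n - 1" | (c) "k = ?n" using k l3 by force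
    then show "{?us ! k, ?us ! ((k + 1) mod length ?us)} \<in> EF"
    proof cases
      case a
      have e: "{ws ! k, ws ! (k + 1)} \<in> ?E'" using ed[rule_format, of k] a by simp
      have "{ws ! k, ws ! (k + 1)} \<noteq> {a,b}"
      proof
        assume "{ws ! k, ws ! (k + 1)} = {a,b}"
        then have "(ws ! k = a \<and> ws ! (k+1) = b) \<or> (ws ! k = b \<and> ws ! (k+1) = a)"
          by (auto simp: doubleton_eq_iff)
        then show False
        proof
          assume "ws ! k = a \<and> ws ! (k+1) = b"
          then have "ws ! (k+1) = ws ! 0" using w0 by simp
          then show False using idx[of "k+1" 0] a n0 by simp
        next
          assume h: "ws ! k = b \<and> ws ! (k+1) = a"
          then have "ws ! k = ws ! 0" using w0 by simp
          then have "k = 0" using idx[of k 0] a n0 by simp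
          moreover have "ws ! (k+1) = ws ! (?n - 1)" using h wl by simp
          then have "k + 1 = ?n - 1" using idx[of "k+1" "?n - 1"] a n1 by simp
          ultimately show False using l3 by simp
        qed
      qed
      then have "{ws ! k, ws ! (k + 1)} \<in> EF" using e by blast
      moreover have "(k + 1) mod length ?us = k + 1" using a by simp
      ultimately show ?thesis using us1 a by simp
    next
      case b
      then have "?us ! k = a" "(k + 1) mod length ?us = ?n" using us1 wl l3 by simp_all
      then show ?thesis using av us2 by simp
    next
      case c
      then have "?us ! k = v" "(k + 1) mod length ?us = 0" by simp_all
      then show ?thesis using vb us1[OF n0] w0 by simp
    qed
  qed
  moreover have "\<forall>i<length ?us. \<forall>j<length ?us. {?us ! i, ?us ! j} \<in> EF \<longrightarrow>
        j = (i + 1) mod length ?us \<or> i = (j + 1) mod length ?us"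
  proof (intro allI impI)
    fix i j assume i: "i < length ?us" and j: "j < length ?us" and e: "{?us ! i, ?us ! j} \<in> EF"
    show "j = (i + 1) mod length ?us \<or> i = (j + 1) mod length ?us"
    proof (cases "i < ?n")
      case iT: True
      show ?thesis
      proof (cases "j < ?n")
        case True
        then show ?thesis using indF[OF iT True] e us1 iT by simp
      next
        case False
        then have jn: "j = ?n" using j by simp
        then have "{v, ws ! i} \<in> EF" using e us1[OF iT] by (simp add: insert_commute)
        then have "i = ?n - 1 \<or> i = 0" using nbv iT by blast
        then show ?thesis using jn l3 by auto
      qed
    next
      case iF: False
      then have in': "i = ?n" using i by simp
      show ?thesis
      proof (cases "j < ?n")
        case True
        then have "{v, ws ! j} \<in> EF" using e us1[OF True] in' by simp
        then have "j = ?n - 1 \<or> j = 0" using nbv True by blast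
        then show ?thesis using in' l3 by auto
      next
        case False
        then have "j = ?n" using j by simp
        then show ?thesis using e in' nl by simp
      qed
    qed
  qed
  ultimately show ?thesis unfolding is_induced_cycle_def by blast
qed


lemma chordal_contract:
  assumes g: "is_graph VF EF" and ch: "chordal VF EF" and vF: "v \<in> VF"
    and N: "nbhd EF v = {x,y}" and nxy: "{x,y} \<notin> EF"
  shows "chordal (VF - {v}) ({e\<in>EF. v \<notin> e} \<union> {{x,y}})"
  unfolding chordal_def
proof
  let ?E' = "{e\<in>EF. v \<notin> e} \<union> {{x,y}}"
  assume "\<exists>vs. 4 \<le> length vs \<and> is_induced_cycle (VF - {v}) ?E' vs"
  then obtain vs where l4: "4 \<le> length vs" and c: "is_induced_cycle (VF - {v}) ?E' vs" by blast
  let ?n = "length vs"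
  have cy: "is_cycle (VF - {v}) ?E' vs" and ind: "\<forall>i<?n. \<forall>j<?n. {vs ! i, vs ! j} \<in> ?E' \<longrightarrow>
        j = (i + 1) mod ?n \<or> i = (j + 1) mod ?n"
    using c unfolding is_induced_cycle_def by simp_all
  have dist: "distinct vs" and sub: "set vs \<subseteq> VF - {v}"
    and ed: "\<forall>i < ?n. {vs ! i, vs ! ((i + 1) mod ?n)} \<in> ?E'"
    using cy unfolding is_cycle_def by simp_all
  have nchF: "\<not> is_induced_cycle VF EF us" if "length us \<ge> 4" for us
    using ch that unfolding chordal_def by blast
  have n0: "0 < ?n" using l4 by linarith
  show False
  proof (cases "x \<in> set vs \<and> y \<in> set vs")
    case False
    have "is_induced_cycle VF EF vs"
      unfolding is_induced_cycle_def is_cycle_def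
    proof (intro conjI allI impI)
      show "3 \<le> length vs" using l4 by simp
      show "distinct vs" using dist .
      show "set vs \<subseteq> VF" using sub by blast
      fix i assume i: "i < length vs"
      have i': "(i + 1) mod ?n < ?n" using n0 by simp
      have "{vs ! i, vs ! ((i + 1) mod ?n)} \<noteq> {x,y}"
        using False nth_mem[OF i] nth_mem[OF i'] by (auto simp: doubleton_eq_iff)
      then show "{vs ! i, vs ! ((i + 1) mod length vs)} \<in> EF" using ed i by blast
    next
      fix i j assume i: "i < length vs" and j: "j < length vs" and e: "{vs ! i, vs ! j} \<in> EF"
      have "vs ! i \<noteq> v" "vs ! j \<noteq> v" using sub nth_mem[OF i] nth_mem[OF j] by auto
      then have "{vs ! i, vs ! j} \<in> ?E'" using e by simp
      then show "j = (i + 1) mod length vs \<or> i = (j + 1) mod length vs" using ind i j by blast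
    qed
    then show False using nchF l4 by blast
  next
    case True
    then obtain p q where p: "p < ?n" "vs ! p = x" and q: "q < ?n" "vs ! q = y"
      by (metis in_set_conv_nth)
    have "{vs ! p, vs ! q} \<in> ?E'" using p q by simp
    then have pq: "q = (p + 1) mod ?n \<or> p = (q + 1) mod ?n" using ind p q by blast
    have rot_last: "(r + (?n - 1)) mod ?n = s" if "r = (s + 1) mod ?n" "s < ?n" for r s
    proof (cases "s + 1 < ?n")
      case True
      then have "r + (?n - 1) = s + ?n" using that by simp
      then show ?thesis using that(2) by simp
    next
      case False
      then have "s + 1 = ?n" using that(2) by simp
      then have "s = ?n - 1" "r = 0" using that(1) by simp_all
      then show ?thesis using n0 by simp
    qed
    have N': "nbhd EF v = {y,x}" and nxy': "{y,x} \<notin> EF" and E'': "?E' = {e\<in>EF. v \<notin> e} \<union> {{y,x}}"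
      using N nxy by (simp_all add: insert_commute)
    from pq show False
    proof
      assume h: "q = (p + 1) mod ?n"
      let ?ws = "rotate q vs"
      have c': "is_induced_cycle (VF - {v}) ?E' ?ws" by (rule rotate_induced[OF c])
      have w0: "?ws ! 0 = y" using nth_rotate[of 0 vs q] n0 q by simp
      have wl: "?ws ! (length ?ws - 1) = x"
        using nth_rotate[of "?n - 1" vs q] n0 rot_last[OF h p(1)] p by simp
      have "is_induced_cycle VF EF (?ws @ [v])"
        by (rule core_append[OF c' g vF N nxy w0 wl])
      then show False using nchF l4 by simp
    next
      assume h: "p = (q + 1) mod ?n"
      let ?ws = "rotate p vs"
      have c': "is_induced_cycle (VF - {v}) ({e\<in>EF. v \<notin> e} \<union> {{y,x}}) ?ws"
        using rotate_induced[OF c] E'' by simp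
      have w0: "?ws ! 0 = x" using nth_rotate[of 0 vs p] n0 p by simp
      have wl: "?ws ! (length ?ws - 1) = y"
        using nth_rotate[of "?n - 1" vs p] n0 rot_last[OF h q(1)] q by simp
      have "is_induced_cycle VF EF (?ws @ [v])"
        by (rule core_append[OF c' g vF N' nxy' w0 wl])
      then show False using nchF l4 by simp
    qed
  qed
qed

lemma nbhd_no_self: "is_graph VF EF \<Longrightarrow> v \<notin> nbhd EF v"
  unfolding nbhd_def using no_loop by (metis insert_absorb2 mem_Collect_eq)

lemma s2_lift_del:
  assumes c: "c \<noteq> v" "c \<notin> nbhd EF v" and s: "s2 {e\<in>EF. v \<notin> e} c"
  shows "s2 EF c"
proof -
  have "{c,v} \<notin> EF" using c(2) unfolding nbhd_def by (simp add: insert_commute)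
  then have nb: "nbhd {e\<in>EF. v \<notin> e} c = nbhd EF c" using c(1) unfolding nbhd_def by auto
  show ?thesis using s unfolding s2_def nb by auto
qed

lemma fc_contract:
  assumes g: "is_graph VF EF" and ch: "chordal VF EF" and vF: "v \<in> VF"
    and N: "nbhd EF v = {x,y}" and xy: "x \<noteq> y" and nxy: "{x,y} \<notin> EF"
    and z: "z \<in> VF" "z \<noteq> v" "z \<noteq> x" "z \<noteq> y" and e: "{x,z} \<in> EF" "{z,y} \<in> EF"
  shows False
proof -
  have vx: "{v,x} \<in> EF" and vy: "{v,y} \<in> EF" using N unfolding nbhd_def by blast+
  have "x \<in> VF" "y \<in> VF" "x \<noteq> v" "y \<noteq> v" using edge_props[OF g vx] edge_props[OF g vy] by auto
  moreover have "{z,v} \<notin> EF"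
  proof
    assume "{z,v} \<in> EF"
    then have "z \<in> nbhd EF v" unfolding nbhd_def by (simp add: insert_commute)
    then show False using N z by blast
  qed
  moreover have "{y,v} \<in> EF" "{v,x} \<in> EF" using vx vy by (simp_all add: insert_commute)
  ultimately have "\<not> chordal VF EF"
    using four_cycle[OF g, of x z y v] z e xy nxy vF by simp
  then show False using ch by simp
qed

lemma s2_lift_endpoint:
  assumes g: "is_graph VF EF" and ch: "chordal VF EF" and vF: "v \<in> VF"
    and N: "nbhd EF v = {x,y}" and xy: "x \<noteq> y" and nxy: "{x,y} \<notin> EF"
    and s: "s2 ({e\<in>EF. v \<notin> e} \<union> {{x,y}}) x"
  shows "s2 EF x"
proof -
  let ?E' = "{e\<in>EF. v \<notin> e} \<union> {{x,y}}"
  have vx: "{v,x} \<in> EF" using N unfolding nbhd_def by blast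
  have yN': "y \<in> nbhd ?E' x" unfolding nbhd_def by simp
  have "nbhd EF x \<subseteq> {v}"
  proof
    fix u assume u: "u \<in> nbhd EF x"
    then have xu: "{x,u} \<in> EF" unfolding nbhd_def by simp
    show "u \<in> {v}"
    proof (rule ccontr)
      assume uv: "u \<notin> {v}"
      have "x \<noteq> v" using edge_props[OF g vx] by blast
      then have "u \<in> nbhd ?E' x" using xu uv unfolding nbhd_def by simp
      moreover have uy: "u \<noteq> y" using xu nxy by blast
      moreover have ux: "u \<noteq> x" using edge_props[OF g xu] by blast
      ultimately have "{u,y} \<in> ?E'" using s yN' unfolding s2_def by blast
      moreover have "{u,y} \<noteq> {x,y}" using ux uy by (auto simp: doubleton_eq_iff)
      ultimately have "{u,y} \<in> EF" by blast
      moreover have "u \<in> VF" using edge_props[OF g xu] by simp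
      ultimately show False using fc_contract[OF g ch vF N xy nxy, of u] xu uv ux uy by simp
    qed
  qed
  moreover have "v \<in> nbhd EF x" using vx unfolding nbhd_def by (simp add: insert_commute)
  ultimately have "nbhd EF x = {v}" by blast
  then show ?thesis unfolding s2_def by simp
qed

lemma s2_lift_contract:
  assumes g: "is_graph VF EF" and ch: "chordal VF EF" and vF: "v \<in> VF"
    and N: "nbhd EF v = {x,y}" and xy: "x \<noteq> y" and nxy: "{x,y} \<notin> EF"
    and c: "c \<in> VF" "c \<noteq> v" and s: "s2 ({e\<in>EF. v \<notin> e} \<union> {{x,y}}) c"
  shows "s2 EF c"
proof -
  let ?E' = "{e\<in>EF. v \<notin> e} \<union> {{x,y}}"
  consider "c = x" | "c = y" | "c \<noteq> x" "c \<noteq> y" by blast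
  then show ?thesis
  proof cases
    case 1 then show ?thesis using s2_lift_endpoint[OF g ch vF N xy nxy] s by simp
  next
    case 2
    have N': "nbhd EF v = {y,x}" and nxy': "{y,x} \<notin> EF" and E'': "?E' = {e\<in>EF. v \<notin> e} \<union> {{y,x}}"
      using N nxy by (simp_all add: insert_commute)
    show ?thesis using s2_lift_endpoint[OF g ch vF N' _ nxy'] s 2 xy E'' by simp
  next
    case 3
    have cN: "c \<notin> nbhd EF v" using N 3 by blast
    then have cv: "{c,v} \<notin> EF" unfolding nbhd_def by (simp add: insert_commute)
    have nb: "nbhd ?E' c = nbhd EF c"
    proof
      show "nbhd ?E' c \<subseteq> nbhd EF c"
      proof
        fix u assume "u \<in> nbhd ?E' c"
        then have "{c,u} \<in> ?E'" unfolding nbhd_def by simp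
        moreover have "{c,u} \<noteq> {x,y}" using 3 by (auto simp: doubleton_eq_iff)
        ultimately show "u \<in> nbhd EF c" unfolding nbhd_def by blast
      qed
      show "nbhd EF c \<subseteq> nbhd ?E' c"
      proof
        fix u assume "u \<in> nbhd EF c"
        then have cu: "{c,u} \<in> EF" unfolding nbhd_def by simp
        then have "u \<noteq> v" using cv by blast
        then show "u \<in> nbhd ?E' c" using cu c(2) unfolding nbhd_def by simp
      qed
    qed
    have "{p,q} \<in> EF" if pq: "p \<in> nbhd EF c" "q \<in> nbhd EF c" "p \<noteq> q" for p q
    proof -
      have "{p,q} \<in> ?E'" using s pq nb unfolding s2_def by blast
      moreover have "{p,q} \<noteq> {x,y}"
      proof
        assume "{p,q} = {x,y}"
        then have "x \<in> nbhd EF c" "y \<in> nbhd EF c" using pq by auto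
        then have "{c,x} \<in> EF" "{c,y} \<in> EF" unfolding nbhd_def by simp_all
        then have "{x,c} \<in> EF" "{c,y} \<in> EF" by (simp_all add: insert_commute)
        then show False using fc_contract[OF g ch vF N xy nxy c(1) c(2) 3(1) 3(2)] by simp
      qed
      ultimately show ?thesis by blast
    qed
    then show ?thesis using s nb unfolding s2_def by simp
  qed
qed


lemma is_graph_add:
  assumes g: "is_graph V E" and "x \<in> V" "y \<in> V" "x \<noteq> y"
  shows "is_graph V (E \<union> {{x,y}})"
proof -
  have "\<forall>e\<in>E. \<exists>u v. e = {u, v} \<and> u \<noteq> v \<and> u \<in> V \<and> v \<in> V" "finite V"
    using g unfolding is_graph_def by simp_all
  moreover have "\<exists>u v. {x,y} = {u, v} \<and> u \<noteq> v \<and> u \<in> V \<and> v \<in> V" using assms(2-4) by blast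
  ultimately show ?thesis unfolding is_graph_def by simp
qed

lemma card_nbhd_le2:
  assumes g: "is_graph VF EF" and td: "is_tree_decomposition VF EF VT ET bag"
    and c3: "\<forall>t\<in>VT. card (bag t) \<le> 3" and t: "t \<in> VT" and v: "v \<in> bag t"
    and nb: "nbhd EF v \<subseteq> bag t"
  shows "card (nbhd EF v) \<le> 2"
proof -
  have fb: "finite (bag t)" using td t g unfolding is_tree_decomposition_def
    by (meson finite_subset graph_finite)
  have "nbhd EF v \<subseteq> bag t - {v}" using nb nbhd_no_self[OF g] by blast
  then have "card (nbhd EF v) \<le> card (bag t - {v})" using fb by (simp add: card_mono)
  also have "\<dots> = card (bag t) - 1" using v fb by simp
  finally show ?thesis using c3 t by force
qed

lemma good_Q:
  "good VF EF \<Longrightarrow> VF \<noteq> {} \<Longrightarrow>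
    (card VF \<le> 3 \<and> (\<forall>a\<in>VF. \<forall>b\<in>VF. a \<noteq> b \<longrightarrow> {a,b} \<in> EF)) \<or>
    (\<exists>a\<in>VF. \<exists>b\<in>VF. a \<noteq> b \<and> {a,b} \<notin> EF \<and> s2 EF a \<and> s2 EF b)"
proof (induction "card VF" arbitrary: VF EF rule: less_induct)
  case less
  note gd = less.prems(1) and ne = less.prems(2)
  have g: "is_graph VF EF" and ch: "chordal VF EF" using gd unfolding good_def by simp_all
  obtain VT ET bag where td: "is_tree_decomposition VF EF VT ET bag" and c3: "\<forall>t\<in>VT. card (bag t) \<le> 3"
    using gd unfolding good_def by metis
  have finF: "finite VF" using g graph_finite by blast
  obtain v t where vF: "v \<in> VF" and t: "t \<in> VT" and vt: "v \<in> bag t" and nbt: "nbhd EF v \<subseteq> bag t"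
    using leaf_vertex[OF td g ne] by blast
  have cN: "card (nbhd EF v) \<le> 2" using card_nbhd_le2[OF g td c3 t vt nbt] .
  have finN: "finite (nbhd EF v)" using nbhd_finite[OF g] .
  let ?VF1 = "VF - {v}" and ?EF1 = "{e\<in>EF. v \<notin> e}"
  have lt: "card ?VF1 < card VF" using card_Diff1_less[OF finF vF] .
  have nbF: "nbhd EF u \<subseteq> VF" for u using nbhd_subset[OF g] .
  show ?case
  proof (cases "s2 EF v")
    case sv: True
    have svc: "\<forall>a\<in>nbhd EF v. \<forall>b\<in>nbhd EF v. a \<noteq> b \<longrightarrow> {a,b} \<in> EF" using sv unfolding s2_def by simp
    show ?thesis
    proof (cases "?VF1 = {}")
      case True
      then have "VF = {v}" using vF by blast
      then have "card VF \<le> 3 \<and> (\<forall>a\<in>VF. \<forall>b\<in>VF. a \<noteq> b \<longrightarrow> {a,b} \<in> EF)" by simp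
      then show ?thesis by (rule disjI1)
    next
      case ne1: False
      have IH: "(card ?VF1 \<le> 3 \<and> (\<forall>a\<in>?VF1. \<forall>b\<in>?VF1. a \<noteq> b \<longrightarrow> {a,b} \<in> ?EF1)) \<or>
          (\<exists>a\<in>?VF1. \<exists>b\<in>?VF1. a \<noteq> b \<and> {a,b} \<notin> ?EF1 \<and> s2 ?EF1 a \<and> s2 ?EF1 b)"
        by (rule less.hyps[OF lt good_del[OF gd] ne1])
      then show ?thesis
      proof
        assume A1: "card ?VF1 \<le> 3 \<and> (\<forall>a\<in>?VF1. \<forall>b\<in>?VF1. a \<noteq> b \<longrightarrow> {a,b} \<in> ?EF1)"
        have c1: "card ?VF1 \<le> 3" using A1 by (rule conjunct1)
        have cpl: "\<forall>a\<in>?VF1. \<forall>b\<in>?VF1. a \<noteq> b \<longrightarrow> {a,b} \<in> ?EF1" using A1 by (rule conjunct2)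
        show ?thesis
        proof (cases "?VF1 \<subseteq> nbhd EF v")
          case True
          have "VF \<subseteq> insert v (nbhd EF v)" using True by blast
          then have "card VF \<le> card (insert v (nbhd EF v))" using finN by (simp add: card_mono)
          also have "\<dots> \<le> Suc (card (nbhd EF v))" by (simp add: card_insert_le_m1)
          finally have "card VF \<le> 3" using cN by simp
          moreover have "{a,b} \<in> EF" if ab: "a \<in> VF" "b \<in> VF" "a \<noteq> b" for a b
          proof (cases "a = v")
            case True
            then have "b \<in> nbhd EF v" using \<open>?VF1 \<subseteq> nbhd EF v\<close> ab by blast
            then show ?thesis using True unfolding nbhd_def by simp
          next
            case aF: False
            show ?thesis
            proof (cases "b = v")
              case True
              then have "a \<in> nbhd EF v" using \<open>?VF1 \<subseteq> nbhd EF v\<close> ab aF by blast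
              then show ?thesis using True unfolding nbhd_def by (simp add: insert_commute)
            next
              case False
              have "a \<in> ?VF1" "b \<in> ?VF1" using ab aF False by simp_all
              then have "{a,b} \<in> ?EF1" using cpl ab(3) by simp
              then show ?thesis by simp
            qed
          qed
          ultimately have "card VF \<le> 3 \<and> (\<forall>a\<in>VF. \<forall>b\<in>VF. a \<noteq> b \<longrightarrow> {a,b} \<in> EF)" by simp
          then show ?thesis by (rule disjI1)
        next
          case False
          then obtain a where a: "a \<in> ?VF1" "a \<notin> nbhd EF v" by blast
          have av: "{a,v} \<notin> EF" using a(2) unfolding nbhd_def by (simp add: insert_commute)
          have nba: "nbhd EF a = ?VF1 - {a}"
          proof
            show "nbhd EF a \<subseteq> ?VF1 - {a}"
            proof
              fix u assume u: "u \<in> nbhd EF a"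
              then have au: "{a,u} \<in> EF" unfolding nbhd_def by simp
              then have "u \<noteq> v" using av by blast
              moreover have "u \<in> VF" "u \<noteq> a" using edge_props[OF g au] by blast+
              ultimately show "u \<in> ?VF1 - {a}" by blast
            qed
            show "?VF1 - {a} \<subseteq> nbhd EF a"
            proof
              fix u assume u: "u \<in> ?VF1 - {a}"
              then have "u \<in> ?VF1" "a \<noteq> u" by auto
              then have "{a,u} \<in> ?EF1" using cpl a(1) by simp
              then show "u \<in> nbhd EF a" unfolding nbhd_def by simp
            qed
          qed
          have "card (?VF1 - {a}) \<le> 2" using c1 a(1) finF by simp
          moreover have "{p,q} \<in> EF" if "p \<in> ?VF1 - {a}" "q \<in> ?VF1 - {a}" "p \<noteq> q" for p q
          proof -
            have "p \<in> ?VF1" "q \<in> ?VF1" using that by simp_all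
            then have "{p,q} \<in> ?EF1" using cpl that(3) by simp
            then show ?thesis by simp
          qed
          ultimately have "s2 EF a" unfolding s2_def nba by blast
          moreover have "v \<noteq> a" using a(1) by blast
          moreover have "{v,a} \<notin> EF" using av by (simp add: insert_commute)
          moreover have "a \<in> VF" using a(1) by simp
          ultimately have "v \<in> VF \<and> a \<in> VF \<and> v \<noteq> a \<and> {v,a} \<notin> EF \<and> s2 EF v \<and> s2 EF a"
            using sv vF by simp
          then have "\<exists>a\<in>VF. \<exists>b\<in>VF. a \<noteq> b \<and> {a,b} \<notin> EF \<and> s2 EF a \<and> s2 EF b" by blast
          then show ?thesis by (rule disjI2)
        qed
      next
        assume "\<exists>a\<in>?VF1. \<exists>b\<in>?VF1. a \<noteq> b \<and> {a,b} \<notin> ?EF1 \<and> s2 ?EF1 a \<and> s2 ?EF1 b"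
        then obtain a b where ab: "a \<in> ?VF1" "b \<in> ?VF1" "a \<noteq> b" "{a,b} \<notin> ?EF1" "s2 ?EF1 a" "s2 ?EF1 b"
          by blast
        have abE: "{a,b} \<notin> EF"
        proof
          assume "{a,b} \<in> EF"
          moreover have "v \<notin> {a,b}" using ab(1,2) by blast
          ultimately have "{a,b} \<in> ?EF1" by simp
          then show False using ab(4) by simp
        qed
        have "a \<notin> nbhd EF v \<or> b \<notin> nbhd EF v"
        proof (rule ccontr)
          assume "\<not> (a \<notin> nbhd EF v \<or> b \<notin> nbhd EF v)"
          then have "a \<in> nbhd EF v" "b \<in> nbhd EF v" by simp_all
          then have "{a,b} \<in> EF" using svc ab(3) by simp
          then show False using abE by simp
        qed
        then obtain c where c: "c \<in> ?VF1" "c \<notin> nbhd EF v" "s2 ?EF1 c"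
        proof
          assume "a \<notin> nbhd EF v" then show ?thesis using that ab(1,5) by blast
        next
          assume "b \<notin> nbhd EF v" then show ?thesis using that ab(2,6) by blast
        qed
        have cv: "c \<noteq> v" using c(1) by simp
        have "s2 EF c" by (rule s2_lift_del[OF cv c(2) c(3)])
        moreover have "{v,c} \<notin> EF" using c(2) unfolding nbhd_def by simp
        moreover have "c \<in> VF" using c(1) by simp
        ultimately have "v \<in> VF \<and> c \<in> VF \<and> v \<noteq> c \<and> {v,c} \<notin> EF \<and> s2 EF v \<and> s2 EF c"
          using sv vF cv by simp
        then have "\<exists>a\<in>VF. \<exists>b\<in>VF. a \<noteq> b \<and> {a,b} \<notin> EF \<and> s2 EF a \<and> s2 EF b" by blast
        then show ?thesis by (rule disjI2)
      qed
    qed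
  next
    case False
    then have "\<not> (\<forall>a\<in>nbhd EF v. \<forall>b\<in>nbhd EF v. a \<noteq> b \<longrightarrow> {a,b} \<in> EF)"
      using cN unfolding s2_def by simp
    then obtain x y where x: "x \<in> nbhd EF v" and y: "y \<in> nbhd EF v" and xy: "x \<noteq> y" and nxy: "{x,y} \<notin> EF"
      by blast
    have N: "nbhd EF v = {x,y}"
    proof -
      have "{x,y} \<subseteq> nbhd EF v" using x y by blast
      moreover have "card {x,y} = 2" using xy by simp
      moreover have "card (nbhd EF v) \<le> card {x,y}" using cN xy by simp
      ultimately show ?thesis using card_subset_eq[OF finN] by (metis antisym card_mono finN)
    qed
    let ?E' = "?EF1 \<union> {{x,y}}"
    have vx: "{v,x} \<in> EF" and vy: "{v,y} \<in> EF" using x y unfolding nbhd_def by simp_all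
    have xV: "x \<in> ?VF1" and yV: "y \<in> ?VF1" using edge_props[OF g vx] edge_props[OF g vy] by auto
    have g': "is_graph ?VF1 ?E'"
    proof -
      have "is_graph ?VF1 ?EF1" by (rule is_graph_del[OF g])
      then show ?thesis using xV yV xy by (rule is_graph_add)
    qed
    have ch': "chordal ?VF1 ?E'" by (rule chordal_contract[OF g ch vF N nxy])
    have ed': "\<forall>e\<in>?E'. \<exists>t\<in>VT. e \<subseteq> bag t - {v}"
    proof
      fix e assume e: "e \<in> ?E'"
      show "\<exists>t\<in>VT. e \<subseteq> bag t - {v}"
      proof (cases "e = {x,y}")
        case True
        then show ?thesis using nbt x y xV yV t by blast
      next
        case False
        then have "e \<in> EF" "v \<notin> e" using e by auto
        then obtain t' where "t' \<in> VT" "e \<subseteq> bag t'" using td unfolding is_tree_decomposition_def by blast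
        then show ?thesis using \<open>v \<notin> e\<close> by blast
      qed
    qed
    have td': "is_tree_decomposition ?VF1 ?E' VT ET (\<lambda>t. bag t - {v})"
      by (rule td_restrict[OF td ed'])
    have c3': "\<forall>t\<in>VT. card (bag t - {v}) \<le> 3"
    proof
      fix t' assume t': "t' \<in> VT"
      have "card (bag t') \<le> 3" using c3 t' by blast
      then show "card (bag t' - {v}) \<le> 3" using td_card[OF td g t', of v] by linarith
    qed
    have gd': "good ?VF1 ?E'" unfolding good_def using g' ch' td' c3' by blast
    have ne1: "?VF1 \<noteq> {}" using xV by blast
    have IH: "(card ?VF1 \<le> 3 \<and> (\<forall>a\<in>?VF1. \<forall>b\<in>?VF1. a \<noteq> b \<longrightarrow> {a,b} \<in> ?E')) \<or>
          (\<exists>a\<in>?VF1. \<exists>b\<in>?VF1. a \<noteq> b \<and> {a,b} \<notin> ?E' \<and> s2 ?E' a \<and> s2 ?E' b)"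
      by (rule less.hyps[OF lt gd' ne1])
    then show ?thesis
    proof
      assume B1: "card ?VF1 \<le> 3 \<and> (\<forall>a\<in>?VF1. \<forall>b\<in>?VF1. a \<noteq> b \<longrightarrow> {a,b} \<in> ?E')"
      show ?thesis
      proof (cases "?VF1 = {x,y}")
        case True
        have nbp: "nbhd EF p = {v}" if p: "{v,p} \<in> EF" "{p,q} \<notin> EF" "{p,q} = {x,y}" for p q
        proof
          show "nbhd EF p \<subseteq> {v}"
          proof
            fix u assume "u \<in> nbhd EF p"
            then have pu: "{p,u} \<in> EF" unfolding nbhd_def by simp
            have "u \<in> VF" "u \<noteq> p" using edge_props[OF g pu] by blast+
            show "u \<in> {v}"
            proof (rule ccontr)
              assume "u \<notin> {v}"
              then have "u \<in> {x,y}" using True \<open>u \<in> VF\<close> by blast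
              then have "u = q" using \<open>u \<noteq> p\<close> p(3) by (auto simp: doubleton_eq_iff)
              then show False using pu p(2) by simp
            qed
          qed
          show "{v} \<subseteq> nbhd EF p" using p(1) unfolding nbhd_def by (simp add: insert_commute)
        qed
        have "nbhd EF x = {v}" using nbp[OF vx nxy] by simp
        moreover have "nbhd EF y = {v}" using nbp[OF vy, of x] nxy by (simp add: insert_commute)
        ultimately have "s2 EF x" "s2 EF y" unfolding s2_def by simp_all
        moreover have "x \<in> VF" "y \<in> VF" using xV yV by simp_all
        ultimately show ?thesis using xy nxy by blast
      next
        case False
        have "\<exists>z. z \<in> ?VF1 \<and> z \<noteq> x \<and> z \<noteq> y"
        proof (rule ccontr)
          assume "\<not> (\<exists>z. z \<in> ?VF1 \<and> z \<noteq> x \<and> z \<noteq> y)"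
          then have "?VF1 \<subseteq> {x,y}" by blast
          then have "?VF1 = {x,y}" using xV yV by blast
          then show False using False by simp
        qed
        then obtain z where z: "z \<in> ?VF1" "z \<noteq> x" "z \<noteq> y" by blast
        have cpl: "\<forall>a\<in>?VF1. \<forall>b\<in>?VF1. a \<noteq> b \<longrightarrow> {a,b} \<in> ?E'" using B1 by (rule conjunct2)
        have "x \<noteq> z" using z(2) by (rule not_sym)
        have "{x,z} \<in> ?E'" by (rule cpl[rule_format, OF xV z(1) \<open>x \<noteq> z\<close>])
        moreover have "{z,y} \<in> ?E'" by (rule cpl[rule_format, OF z(1) yV z(3)])
        moreover have "{x,z} \<noteq> {x,y}" "{z,y} \<noteq> {x,y}" using z xy by (auto simp: doubleton_eq_iff)
        ultimately have "{x,z} \<in> EF" "{z,y} \<in> EF" by blast+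
        then show ?thesis using fc_contract[OF g ch vF N xy nxy, of z] z by blast
      qed
    next
      assume "\<exists>a\<in>?VF1. \<exists>b\<in>?VF1. a \<noteq> b \<and> {a,b} \<notin> ?E' \<and> s2 ?E' a \<and> s2 ?E' b"
      then obtain a b where ab: "a \<in> ?VF1" "b \<in> ?VF1" "a \<noteq> b" "{a,b} \<notin> ?E'" "s2 ?E' a" "s2 ?E' b"
        by blast
      have aV: "a \<in> VF" "a \<noteq> v" and bV: "b \<in> VF" "b \<noteq> v" using ab(1,2) by simp_all
      have "{a,b} \<notin> EF"
      proof
        assume "{a,b} \<in> EF"
        moreover have "v \<notin> {a,b}" using aV(2) bV(2) by simp
        ultimately have "{a,b} \<in> ?E'" by simp
        then show False using ab(4) by simp
      qed
      moreover have "s2 EF a" by (rule s2_lift_contract[OF g ch vF N xy nxy aV ab(5)])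
      moreover have "s2 EF b" by (rule s2_lift_contract[OF g ch vF N xy nxy bV ab(6)])
      ultimately show ?thesis using aV(1) bV(1) ab(3) by blast
    qed
  qed
qed


lemma good_s2: "good VF EF \<Longrightarrow> VF \<noteq> {} \<Longrightarrow> \<exists>w\<in>VF. s2 EF w"
proof -
  assume gd: "good VF EF" and ne: "VF \<noteq> {}"
  have g: "is_graph VF EF" using gd unfolding good_def by simp
  have finF: "finite VF" using g graph_finite by blast
  from good_Q[OF gd ne] show ?thesis
  proof
    assume A: "card VF \<le> 3 \<and> (\<forall>a\<in>VF. \<forall>b\<in>VF. a \<noteq> b \<longrightarrow> {a,b} \<in> EF)"
    have c3: "card VF \<le> 3" using A by (rule conjunct1)
    have cpl: "\<forall>a\<in>VF. \<forall>b\<in>VF. a \<noteq> b \<longrightarrow> {a,b} \<in> EF" using A by (rule conjunct2)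
    obtain a where a: "a \<in> VF" using ne by blast
    have nba: "nbhd EF a = VF - {a}"
    proof
      show "nbhd EF a \<subseteq> VF - {a}" using nbhd_subset[OF g] nbhd_no_self[OF g] by blast
      show "VF - {a} \<subseteq> nbhd EF a"
      proof
        fix u assume "u \<in> VF - {a}"
        then have "u \<in> VF" "a \<noteq> u" by auto
        then have "{a,u} \<in> EF" using cpl a by simp
        then show "u \<in> nbhd EF a" unfolding nbhd_def by simp
      qed
    qed
    have "card (VF - {a}) \<le> 2" using c3 a finF by simp
    moreover have "{p,q} \<in> EF" if "p \<in> VF - {a}" "q \<in> VF - {a}" "p \<noteq> q" for p q
    proof -
      have "p \<in> VF" "q \<in> VF" using that by simp_all
      then show ?thesis using cpl that(3) by simp
    qed
    ultimately have "s2 EF a" unfolding s2_def nba by blast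
    then show ?thesis using a by blast
  next
    assume "\<exists>a\<in>VF. \<exists>b\<in>VF. a \<noteq> b \<and> {a,b} \<notin> EF \<and> s2 EF a \<and> s2 EF b"
    then show ?thesis by blast
  qed
qed

lemma Tot_empty:
  assumes "is_graph {} EF"
  shows "Tot l V E {} EF \<alpha> \<beta> = 1"
proof -
  have e: "EF = {}" using assms unfolding is_graph_def by auto
  have h: "homs {} {} V E = {\<lambda>_. undefined}" unfolding homs_def is_hom_def by simp
  have o: "ordered_edges {} = {}" unfolding ordered_edges_def by simp
  show ?thesis unfolding Tot_def W_def e h o by simp
qed

lemma card_le2_cases:
  assumes "finite N" "card N \<le> 2"
  shows "N = {} \<or> (\<exists>x. N = {x}) \<or> (\<exists>x y. x \<noteq> y \<and> N = {x,y})"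
proof -
  have "card N = 0 \<or> card N = 1 \<or> card N = 2" using assms(2) by linarith
  moreover have "card N = 0 \<Longrightarrow> N = {}" using assms(1) by simp
  moreover have "card N = 1 \<Longrightarrow> \<exists>x. N = {x}" using card_1_singleton_iff[of N] by simp
  moreover have "card N = 2 \<Longrightarrow> \<exists>x y. x \<noteq> y \<and> N = {x,y}" using card_2_iff by metis
  ultimately show ?thesis by blast
qed

lemma main_ind:
  fixes V :: "'a set" and E :: "'a set set" and V' :: "'b set" and E' :: "'b set set"
  assumes gG: "is_graph V E" and niG: "no_isolated V E"
    and gG': "is_graph V' E'" and niG': "no_isolated V' E'"
    and eq: "\<forall>l. eb_multiset l E = eb_multiset l E'"
  shows "good VF EF \<Longrightarrow> Tot l V E VF EF \<alpha> \<beta> = Tot l V' E' VF EF \<alpha> \<beta>"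
proof (induction "card VF" arbitrary: VF EF l \<alpha> \<beta> rule: less_induct)
  case less
  have gF: "is_graph VF EF" using less.prems unfolding good_def by simp
  have finF: "finite VF" using gF graph_finite by blast
  show ?case
  proof (cases "VF = {}")
    case True
    then show ?thesis using Tot_empty[of EF l V E \<alpha> \<beta>] Tot_empty[of EF l V' E' \<alpha> \<beta>] gF by simp
  next
    case False
    obtain w where w: "w \<in> VF" and s: "s2 EF w" using good_s2[OF less.prems False] by blast
    have IH: "Tot l V E (VF - {w}) {e\<in>EF. w \<notin> e} \<alpha> \<beta> = Tot l V' E' (VF - {w}) {e\<in>EF. w \<notin> e} \<alpha> \<beta>"
      for l \<alpha> \<beta>
      by (rule less.hyps[OF card_Diff1_less[OF finF w] good_del[OF less.prems]])
    have "finite (nbhd EF w)" using nbhd_finite[OF gF] .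
    moreover have "card (nbhd EF w) \<le> 2" using s unfolding s2_def by simp
    ultimately have disj: "nbhd EF w = {} \<or> (\<exists>x. nbhd EF w = {x}) \<or> (\<exists>x y. x \<noteq> y \<and> nbhd EF w = {x,y})"
      by (rule card_le2_cases)
    consider "nbhd EF w = {}" | x where "nbhd EF w = {x}" | x y where "x \<noteq> y" "nbhd EF w = {x,y}"
      using disj by blast
    then show ?thesis
    proof cases
      case 1
      show ?thesis
    proof -
      have "(\<Sum>z\<in>V. \<alpha> w (vc l E z)) = (\<Sum>z\<in>V'. \<alpha> w (vc l E' z))"
        by (rule vsum_eq[OF gG niG gG' niG']) (use eq in simp)
      then show ?thesis
        unfolding Tot_step0[OF gF w gG 1] Tot_step0[OF gF w gG' 1] IH by simp
    qed
    next
      case (2 x)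
      show ?thesis
        unfolding Tot_step1[OF gF w gG 2] Tot_step1[OF gF w gG' 2] IH ..
    next
      case (3 x y)
      have exy: "{x,y} \<in> EF" using s 3 unfolding s2_def by auto
      show ?thesis
        unfolding Tot_step2[OF gF w gG 3(2) 3(1) exy] Tot_step2[OF gF w gG' 3(2) 3(1) exy] IH ..
    qed
  qed
qed

theorem mainTheorem8:
  fixes V :: "'a set" and E :: "'a set set"
    and V' :: "'b set" and E' :: "'b set set"
    and VF :: "'c set" and EF :: "'c set set"
  assumes "is_graph V E" and "no_isolated V E"
    and "is_graph V' E'" and "no_isolated V' E'"
    and "is_graph VF EF" and "chordal VF EF" and "treewidth VF EF \<le> 2"
    and "hom_count VF EF V E \<noteq> hom_count VF EF V' E'"
  shows "eb_distinguishable V E V' E'"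
proof (rule ccontr)
  assume "\<not> eb_distinguishable V E V' E'"
  then have eq: "\<forall>l. eb_multiset l E = eb_multiset l E'" unfolding eb_distinguishable_def by simp
  have "good VF EF" using treewidth_good assms(5,6,7) .
  then have "Tot 0 V E VF EF (\<lambda>_ _. 1) (\<lambda>_ _ _. 1) = Tot 0 V' E' VF EF (\<lambda>_ _. 1) (\<lambda>_ _ _. 1)"
    using main_ind[OF assms(1-4) eq] by blast
  then show False using assms(8) Tot_one[of VF EF V E 0] Tot_one[of VF EF V' E' 0] by simp
qed

end
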